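(* Let $(u_n)_{n\in\mathbb Z}$ and $(v_n)_{n\in\mathbb Z}$ be complex sequences that vanish faster than any negative power of $|n|$ as $n\to\pm\infty$ and satisfy $1-u_nv_n\neq0$ for all $n$. For the system $$\begin{bmatrix}\xi_n\\ \eta_n\end{bmatrix}=\begin{bmatrix} z & z\,u_n\\ z^{-1}v_n & z^{-1}\end{bmatrix}\begin{bmatrix}\xi_{n+1}\\ \eta_{n+1}\end{bmatrix},\qquad n\in\mathbb Z,$$ with $D_\infty:=\prod_{j=-\infty}^{\infty}(1-u_jv_j)$, the (extended) transmission coefficients satisfy $$T_{\rm l}=1-z^2\sum_{k=-\infty}^{\infty}u_{k+1}v_k+O(z^4),\qquad T_{\rm r}=D_\infty\Big[1-z^2\sum_{k=-\infty}^{\infty}u_{k+1}v_k+O(z^4)\Big],\qquad z\to0,$$ $$\bar T_{\rm l}=1-\frac1{z^2}\sum_{k=-\infty}^{\infty}u_{k}v_{k+1}+O(z^{-4}),\qquad \bar T_{\rm r}=D_\infty\Big[1-\frac1{z^2}\sum_{k=-\infty}^{\infty}u_{k}v_{k+1}+O(z^{-4})\Big],\qquad z\to\infty.$$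
   Context: For $z$ on the unit circle, the Jost solutions $\psi_n,\bar\psi_n,\phi_n,\bar\phi_n$ (overbars are not complex conjugation) are the solutions with $\psi_n=\begin{bmatrix}o(1)\\ z^n[1+o(1)]\end{bmatrix}$ as $n\to+\infty$; $\phi_n=\begin{bmatrix}z^{-n}[1+o(1)]\\ o(1)\end{bmatrix}$ as $n\to-\infty$; $\bar\psi_n=\begin{bmatrix}z^{-n}[1+o(1)]\\ o(1)\end{bmatrix}$ as $n\to+\infty$; $\bar\phi_n=\begin{bmatrix}o(1)\\ z^{n}[1+o(1)]\end{bmatrix}$ as $n\to-\infty$. The transmission coefficients are defined by: the second component of $\psi_n$ is $(1/T_{\rm l})z^n[1+o(1)]$ as $n\to-\infty$; the first component of $\phi_n$ is $(1/T_{\rm r})z^{-n}[1+o(1)]$ as $n\to+\infty$; the first component of $\bar\psi_n$ is $(1/\bar T_{\rm l})z^{-n}[1+o(1)]$ as $n\to-\infty$; the second component of $\bar\phi_n$ is $(1/\bar T_{\rm r})z^{n}[1+o(1)]$ as $n\to+\infty$. The functions $1/T_{\rm l},1/T_{\rm r}$ extend analytically from $|z|=1$ to $|z|<1$ and $1/\bar T_{\rm l},1/\bar T_{\rm r}$ to $|z|>1$; the asymptotics refer to these extensions. *)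

theory Defs
  imports "HOL-Complex_Analysis.Complex_Analysis" "HOL-Library.Landau_Symbols"
begin

definition rapidly_decaying :: "(int \<Rightarrow> complex) \<Rightarrow> bool" where
  "rapidly_decaying u \<longleftrightarrow>
     (\<forall>m::nat. ((\<lambda>n. real_of_int \<bar>n\<bar> ^ m * cmod (u n)) \<longlongrightarrow> 0) at_top \<and>
               ((\<lambda>n. real_of_int \<bar>n\<bar> ^ m * cmod (u n)) \<longlongrightarrow> 0) at_bot)"

definition solves_sys :: "(int \<Rightarrow> complex) \<Rightarrow> (int \<Rightarrow> complex) \<Rightarrow> complex
     \<Rightarrow> (int \<Rightarrow> complex) \<Rightarrow> (int \<Rightarrow> complex) \<Rightarrow> bool" where
  "solves_sys u v z xi eta \<longleftrightarrow>
     (\<forall>n. xi n = z * xi (n+1) + z * u n * eta (n+1) \<and>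
          eta n = v n * xi (n+1) / z + eta (n+1) / z)"

definition jost_psi where
  "jost_psi u v z xi eta \<longleftrightarrow> solves_sys u v z xi eta \<and>
     (xi \<longlongrightarrow> 0) at_top \<and> ((\<lambda>n. eta n / z powi n) \<longlongrightarrow> 1) at_top"

definition jost_phi where
  "jost_phi u v z xi eta \<longleftrightarrow> solves_sys u v z xi eta \<and>
     ((\<lambda>n. xi n / z powi (-n)) \<longlongrightarrow> 1) at_bot \<and> (eta \<longlongrightarrow> 0) at_bot"

definition jost_psibar where
  "jost_psibar u v z xi eta \<longleftrightarrow> solves_sys u v z xi eta \<and>
     ((\<lambda>n. xi n / z powi (-n)) \<longlongrightarrow> 1) at_top \<and> (eta \<longlongrightarrow> 0) at_top"

definition jost_phibar where
  "jost_phibar u v z xi eta \<longleftrightarrow> solves_sys u v z xi eta \<and>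
     (xi \<longlongrightarrow> 0) at_bot \<and> ((\<lambda>n. eta n / z powi n) \<longlongrightarrow> 1) at_bot"

text \<open>Values of 1/T on the unit circle: the Jost solution exists, and every Jost
  solution has the stated asymptotics with constant c.\<close>
definition invTl_at where
  "invTl_at u v z c \<longleftrightarrow> (\<exists>xi eta. jost_psi u v z xi eta) \<and>
     (\<forall>xi eta. jost_psi u v z xi eta \<longrightarrow> ((\<lambda>n. eta n / z powi n) \<longlongrightarrow> c) at_bot)"

definition invTr_at where
  "invTr_at u v z c \<longleftrightarrow> (\<exists>xi eta. jost_phi u v z xi eta) \<and>
     (\<forall>xi eta. jost_phi u v z xi eta \<longrightarrow> ((\<lambda>n. xi n / z powi (-n)) \<longlongrightarrow> c) at_top)"

definition invTlbar_at where
  "invTlbar_at u v z c \<longleftrightarrow> (\<exists>xi eta. jost_psibar u v z xi eta) \<and>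
     (\<forall>xi eta. jost_psibar u v z xi eta \<longrightarrow> ((\<lambda>n. xi n / z powi (-n)) \<longlongrightarrow> c) at_bot)"

definition invTrbar_at where
  "invTrbar_at u v z c \<longleftrightarrow> (\<exists>xi eta. jost_phibar u v z xi eta) \<and>
     (\<forall>xi eta. jost_phibar u v z xi eta \<longrightarrow> ((\<lambda>n. eta n / z powi n) \<longlongrightarrow> c) at_top)"

definition ext_inside :: "(complex \<Rightarrow> complex \<Rightarrow> bool) \<Rightarrow> (complex \<Rightarrow> complex) \<Rightarrow> bool" where
  "ext_inside P F \<longleftrightarrow> F holomorphic_on ball 0 1 \<and> continuous_on (cball 0 1) F \<and>
     (\<forall>z. cmod z = 1 \<longrightarrow> P z (F z))"

definition ext_outside :: "(complex \<Rightarrow> complex \<Rightarrow> bool) \<Rightarrow> (complex \<Rightarrow> complex) \<Rightarrow> bool" where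
  "ext_outside P F \<longleftrightarrow> F holomorphic_on {z. 1 < cmod z} \<and> continuous_on {z. 1 \<le> cmod z} F \<and>
     (\<forall>z. cmod z = 1 \<longrightarrow> P z (F z))"

definition Dinf :: "(int \<Rightarrow> complex) \<Rightarrow> (int \<Rightarrow> complex) \<Rightarrow> complex" where
  "Dinf u v = lim (\<lambda>N::nat. \<Prod>j\<in>{-int N..int N}. 1 - u j * v j)"

end

theory Submission
  imports Defs
begin

definition Hs :: "(int \<Rightarrow> complex) \<Rightarrow> bool" where
  "Hs u \<longleftrightarrow> summable (\<lambda>j. cmod (u (int j))) \<and> summable (\<lambda>j. cmod (u (- int j)))"

lemma rapid_Hs:
  assumes "rapidly_decaying u" shows "Hs u"
proof -
  have t: "((\<lambda>n. real_of_int \<bar>n\<bar> ^ 2 * cmod (u n)) \<longlongrightarrow> 0) at_top"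
       "((\<lambda>n. real_of_int \<bar>n\<bar> ^ 2 * cmod (u n)) \<longlongrightarrow> 0) at_bot"
    using assms unfolding rapidly_decaying_def by blast+
  have s2: "summable (\<lambda>j::nat. inverse (real j ^ 2))"
    by (rule inverse_power_summable) auto
  have key: "cmod (u n) \<le> inverse (real_of_int \<bar>n\<bar> ^ 2)"
    if "real_of_int \<bar>n\<bar> ^ 2 * cmod (u n) < 1" "n \<noteq> 0" for n
  proof -
    have p: "real_of_int \<bar>n\<bar> ^ 2 > 0" using that(2) by simp
    show ?thesis using that(1) p by (simp add: field_simps)
  qed
  from order_tendstoD(2)[OF t(1), of 1] obtain N where
    N: "\<And>n. n \<ge> N \<Longrightarrow> real_of_int \<bar>n\<bar> ^ 2 * cmod (u n) < 1"
    by (auto simp: eventually_at_top_linorder)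
  from order_tendstoD(2)[OF t(2), of 1] obtain M where
    M: "\<And>n. n \<le> M \<Longrightarrow> real_of_int \<bar>n\<bar> ^ 2 * cmod (u n) < 1"
    by (auto simp: eventually_at_bot_linorder)
  have "summable (\<lambda>j. cmod (u (int j)))"
  proof (rule summable_comparison_test'[OF s2, of "nat (max N 1)"])
    fix j :: nat assume "nat (max N 1) \<le> j"
    hence "int j \<ge> N" "int j \<noteq> 0" by auto
    from key[OF N[OF this(1)] this(2)] show "norm (cmod (u (int j))) \<le> inverse (real j ^ 2)"
      by simp
  qed
  moreover have "summable (\<lambda>j. cmod (u (- int j)))"
  proof (rule summable_comparison_test'[OF s2, of "nat (max (-M) 1)"])
    fix j :: nat assume "nat (max (-M) 1) \<le> j"
    hence "- int j \<le> M" "- int j \<noteq> 0" by auto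
    from key[OF M[OF this(1)] this(2)] show "norm (cmod (u (- int j))) \<le> inverse (real j ^ 2)"
      by simp
  qed
  ultimately show ?thesis unfolding Hs_def by blast
qed


locale psi_setup =
  fixes u v :: "int \<Rightarrow> complex"
  assumes Hu: "Hs u" and Hv: "Hs v"
begin

definition U :: "int \<Rightarrow> real" where "U k = cmod (u k) + cmod (v k)"
definition sig :: real where "sig = (\<Sum>j. U (int j)) + (\<Sum>j. U (- int j))"
definition E :: real where "E = exp sig"

lemma U_nonneg: "U k \<ge> 0" by (simp add: U_def)

lemma summ_pos: "summable (\<lambda>j. U (int j))"
  using Hu Hv unfolding Hs_def U_def by (intro summable_add) auto
lemma summ_neg: "summable (\<lambda>j. U (- int j))"
  using Hu Hv unfolding Hs_def U_def by (intro summable_add) auto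

lemma sumU_le:
  assumes "finite A" shows "sum U A \<le> sig"
proof -
  have split: "sum U A = sum U (A \<inter> {0..}) + sum U (A - {0..})"
    using assms by (rule sum.Int_Diff)
  define S where "S = nat ` (A \<inter> {0..})"
  have S1: "A \<inter> {0..} = int ` S" unfolding S_def by (force simp: image_iff)
  have "sum U (A \<inter> {0..}) = sum (\<lambda>j. U (int j)) S"
    unfolding S1 by (subst sum.reindex) auto
  also have "\<dots> \<le> (\<Sum>j. U (int j))"
    by (rule sum_le_suminf[OF summ_pos]) (use assms in \<open>auto simp: S_def U_nonneg\<close>)
  finally have p1: "sum U (A \<inter> {0..}) \<le> (\<Sum>j. U (int j))" .
  define S' where "S' = (\<lambda>k. nat (-k)) ` (A - {0..})"
  have S2: "A - {0..} = (\<lambda>j. - int j) ` S'" unfolding S'_def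
    by (force simp: image_iff)
  have "sum U (A - {0..}) = sum (\<lambda>j. U (- int j)) S'"
    unfolding S2 by (subst sum.reindex) (auto simp: inj_on_def)
  also have "\<dots> \<le> (\<Sum>j. U (- int j))"
    by (rule sum_le_suminf[OF summ_neg]) (use assms in \<open>auto simp: S'_def U_nonneg\<close>)
  finally have p2: "sum U (A - {0..}) \<le> (\<Sum>j. U (- int j))" .
  show ?thesis using split p1 p2 unfolding sig_def by linarith
qed

lemma U_le: "U k \<le> sig"
  using sumU_le[of "{k}"] by simp

lemma sig_nonneg: "sig \<ge> 0" using U_le[of 0] U_nonneg[of 0] by linarith

lemma u_le: "cmod (u k) \<le> sig"
  using U_le[of k] norm_ge_zero[of "v k"] unfolding U_def by linarith
lemma v_le: "cmod (v k) \<le> sig"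
  using U_le[of k] norm_ge_zero[of "u k"] unfolding U_def by linarith

lemma prodU_le:
  assumes "finite A" shows "(\<Prod>k\<in>A. 1 + U k) \<le> E"
proof -
  have "(\<Prod>k\<in>A. 1 + U k) \<le> exp (sum U A)"
    by (rule prod_le_exp_sum) (simp add: U_nonneg)
  also have "\<dots> \<le> E" unfolding E_def using sumU_le[OF assms] by simp
  finally show ?thesis .
qed

lemma E_ge1: "E \<ge> 1" unfolding E_def using sig_nonneg by simp

end

context psi_setup begin

definition stp :: "int \<Rightarrow> complex \<Rightarrow> complex \<times> complex \<Rightarrow> complex \<times> complex" where
  "stp n z p = (z^2 * (fst p + u n * snd p), v n * fst p + snd p)"

primrec trc :: "complex \<Rightarrow> int \<Rightarrow> nat \<Rightarrow> complex \<times> complex" where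
  "trc z N 0 = (0, 1)"
| "trc z N (Suc k) = stp (N - int k - 1) z (trc z N k)"

definition Y :: "complex \<Rightarrow> int \<Rightarrow> int \<Rightarrow> complex \<times> complex" where
  "Y z N n = trc z N (nat (N - n))"

definition nd :: "complex \<times> complex \<Rightarrow> complex \<times> complex \<Rightarrow> real" where
  "nd p q = cmod (fst p - fst q) + cmod (snd p - snd q)"

lemma nd_tri: "nd p r \<le> nd p q + nd q r"
proof -
  have "cmod (fst p - fst r) \<le> cmod (fst p - fst q) + cmod (fst q - fst r)"
    by (metis diff_add_cancel add_diff_eq norm_triangle_ineq diff_diff_eq2)
  moreover have "cmod (snd p - snd r) \<le> cmod (snd p - snd q) + cmod (snd q - snd r)"
    by (metis diff_add_cancel add_diff_eq norm_triangle_ineq diff_diff_eq2)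
  ultimately show ?thesis unfolding nd_def by linarith
qed

lemma nd_sym: "nd p q = nd q p"
  unfolding nd_def by (simp add: norm_minus_commute)

lemma nd_nonneg: "nd p q \<ge> 0" unfolding nd_def by simp

lemma Y_ge: "N \<le> n \<Longrightarrow> Y z N n = (0, 1)"
  unfolding Y_def by simp

lemma Y_step: "n < N \<Longrightarrow> Y z N n = stp n z (Y z N (n+1))"
proof -
  assume a: "n < N"
  have "nat (N - n) = Suc (nat (N - (n+1)))" using a by simp
  moreover have "N - int (nat (N - (n+1))) - 1 = n" using a by simp
  ultimately show ?thesis unfolding Y_def by simp
qed

lemma stp_nd:
  assumes z: "cmod z \<le> 1"
  shows "nd (stp n z p) (stp n z q) \<le> (1 + U n) * nd p q"
proof -
  define a where "a = fst p - fst q"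
  define b where "b = snd p - snd q"
  have e1: "fst (stp n z p) - fst (stp n z q) = z^2 * (a + u n * b)"
    unfolding stp_def a_def b_def by (simp add: algebra_simps)
  have e2: "snd (stp n z p) - snd (stp n z q) = v n * a + b"
    unfolding stp_def a_def b_def by (simp add: algebra_simps)
  have z2: "cmod (z^2) \<le> 1" using z by (simp add: norm_power power_le_one)
  have "cmod (z^2 * (a + u n * b)) \<le> cmod (a + u n * b)"
    using z2 by (simp add: norm_mult mult_left_le_one_le)
  also have "\<dots> \<le> cmod a + cmod (u n) * cmod b"
    by (metis norm_mult norm_triangle_ineq)
  finally have i1: "cmod (z^2 * (a + u n * b)) \<le> cmod a + cmod (u n) * cmod b" .
  have i2: "cmod (v n * a + b) \<le> cmod (v n) * cmod a + cmod b"
    by (metis norm_mult norm_triangle_ineq)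
  have "cmod a + cmod (u n) * cmod b + (cmod (v n) * cmod a + cmod b)
        \<le> (1 + U n) * (cmod a + cmod b)"
    unfolding U_def by (simp add: algebra_simps)
  thus ?thesis unfolding nd_def e1 e2 a_def[symmetric] b_def[symmetric]
    using i1 i2 by linarith
qed

lemma propag_aux:
  assumes z: "cmod z \<le> 1"
    and p: "\<And>n'. m \<le> n' \<Longrightarrow> n' < M \<Longrightarrow> p n' = stp n' z (p (n'+1))"
    and q: "\<And>n'. m \<le> n' \<Longrightarrow> n' < M \<Longrightarrow> q n' = stp n' z (q (n'+1))"
  shows "M - m = int k \<Longrightarrow> nd (p m) (q m) \<le> (\<Prod>j\<in>{m..<M}. 1 + U j) * nd (p M) (q M)"
  using p q
proof (induction k arbitrary: m)
  case 0
  then show ?case by simp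
next
  case (Suc k)
  have mM: "m < M" using Suc.prems by simp
  have IH: "nd (p (m+1)) (q (m+1)) \<le> (\<Prod>j\<in>{m+1..<M}. 1 + U j) * nd (p M) (q M)"
    using Suc.prems by (intro Suc.IH) auto
  have "nd (p m) (q m) = nd (stp m z (p (m+1))) (stp m z (q (m+1)))"
    using Suc.prems mM by simp
  also have "\<dots> \<le> (1 + U m) * nd (p (m+1)) (q (m+1))" by (rule stp_nd[OF z])
  also have "\<dots> \<le> (1 + U m) * ((\<Prod>j\<in>{m+1..<M}. 1 + U j) * nd (p M) (q M))"
    using IH U_nonneg[of m] by (intro mult_left_mono) auto
  also have "\<dots> = (\<Prod>j\<in>{m..<M}. 1 + U j) * nd (p M) (q M)"
  proof -
    have "{m..<M} = insert m {m+1..<M}" using mM by auto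
    thus ?thesis by simp
  qed
  finally show ?case .
qed

lemma propag:
  assumes z: "cmod z \<le> 1" and mM: "m \<le> M"
    and p: "\<And>n'. m \<le> n' \<Longrightarrow> n' < M \<Longrightarrow> p n' = stp n' z (p (n'+1))"
    and q: "\<And>n'. m \<le> n' \<Longrightarrow> n' < M \<Longrightarrow> q n' = stp n' z (q (n'+1))"
  shows "nd (p m) (q m) \<le> E * nd (p M) (q M)"
proof -
  have e: "M - m = int (nat (M - m))" using mM by simp
  have "nd (p m) (q m) \<le> (\<Prod>j\<in>{m..<M}. 1 + U j) * nd (p M) (q M)"
    by (rule propag_aux[OF z p q e])
  also have "\<dots> \<le> E * nd (p M) (q M)"
    by (intro mult_right_mono prodU_le nd_nonneg) auto
  finally show ?thesis .
qed

lemma Y_bound: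
  assumes z: "cmod z \<le> 1"
  shows "nd (Y z N n) (0,0) \<le> E"
proof (cases "N \<le> n")
  case True thus ?thesis using E_ge1 by (simp add: Y_ge nd_def)
next
  case False
  have "nd (Y z N n) ((\<lambda>_. (0::complex,0::complex)) n) \<le> E * nd (Y z N N) ((\<lambda>_. (0,0)) N)"
    by (rule propag[OF z]) (use False in \<open>auto simp: Y_step stp_def\<close>)
  thus ?thesis by (simp add: Y_ge nd_def)
qed

lemma Y_diff1:
  assumes z: "cmod z \<le> 1"
  shows "nd (Y z (N+1) n) (Y z N n) \<le> E * cmod (u N)"
proof (cases "N < n")
  case True thus ?thesis using E_ge1 by (simp add: Y_ge nd_def)
next
  case False
  have "nd (Y z (N+1) n) (Y z N n) \<le> E * nd (Y z (N+1) N) (Y z N N)"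
    by (rule propag[OF z]) (use False in \<open>auto simp: Y_step\<close>)
  also have "nd (Y z (N+1) N) (Y z N N) = cmod (z^2 * u N)"
    by (simp add: Y_step Y_ge nd_def stp_def)
  also have "\<dots> \<le> cmod (u N)"
    using z by (simp add: norm_mult norm_power power_le_one mult_left_le_one_le)
  finally show ?thesis using E_ge1 by (simp add: mult_left_mono)
qed

lemma Y_diff:
  assumes z: "cmod z \<le> 1" and NM: "N \<le> M"
  shows "nd (Y z (int M) n) (Y z (int N) n) \<le> E * (\<Sum>j\<in>{N..<M}. cmod (u (int j)))"
  using NM
proof (induction M)
  case 0 thus ?case by (simp add: nd_def)
next
  case (Suc M)
  show ?case
  proof (cases "N = Suc M")
    case True thus ?thesis by (simp add: nd_def)
  next
    case False
    hence NM: "N \<le> M" using Suc.prems by simp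
    have "nd (Y z (int (Suc M)) n) (Y z (int N) n)
          \<le> nd (Y z (int M + 1) n) (Y z (int M) n) + nd (Y z (int M) n) (Y z (int N) n)"
      using nd_tri[of "Y z (int M + 1) n" "Y z (int N) n" "Y z (int M) n"] by (simp add: add.commute)
    also have "\<dots> \<le> E * cmod (u (int M)) + E * (\<Sum>j\<in>{N..<M}. cmod (u (int j)))"
      using Y_diff1[OF z, of "int M" n] Suc.IH[OF NM] by linarith
    also have "\<dots> = E * (\<Sum>j\<in>{N..<Suc M}. cmod (u (int j)))"
      using NM by (simp add: algebra_simps)
    finally show ?thesis .
  qed
qed

lemma trc_holo:
  "(\<lambda>z. fst (trc z N k)) holomorphic_on UNIV \<and> (\<lambda>z. snd (trc z N k)) holomorphic_on UNIV"
proof (induction k)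
  case 0 thus ?case by simp
next
  case (Suc k)
  thus ?case unfolding trc.simps stp_def fst_conv snd_conv
    by (auto intro!: holomorphic_intros)
qed

lemma Y_holo:
  "(\<lambda>z. fst (Y z N n)) holomorphic_on UNIV" "(\<lambda>z. snd (Y z N n)) holomorphic_on UNIV"
  unfolding Y_def using trc_holo by auto

end

definition tail :: "(nat \<Rightarrow> real) \<Rightarrow> nat \<Rightarrow> real" where
  "tail g N = (\<Sum>j. g (j + N))"

lemma sum_le_tail:
  assumes "summable g" "\<And>j. g j \<ge> 0" "N \<le> M"
  shows "(\<Sum>j\<in>{N..<M}. g j) \<le> tail g N"
proof -
  have "(\<Sum>j\<in>{N..<M}. g j) = (\<Sum>j\<in>{0..<M-N}. g (j + N))"
    using sum.shift_bounds_nat_ivl[of g 0 N "M-N"] assms(3) by simp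
  also have "\<dots> \<le> tail g N" unfolding tail_def
    by (rule sum_le_suminf) (use assms summable_ignore_initial_segment in auto)
  finally show ?thesis .
qed

lemma tail_nonneg: "summable g \<Longrightarrow> (\<And>j. g j \<ge> 0) \<Longrightarrow> tail g N \<ge> 0"
  unfolding tail_def by (intro suminf_nonneg summable_ignore_initial_segment) auto

lemma tail_lim: "summable g \<Longrightarrow> tail g \<longlonglongrightarrow> 0"
proof -
  assume g: "summable g"
  have "tail g = (\<lambda>N. suminf g - (\<Sum>i<N. g i))"
    unfolding tail_def proof (intro ext)
    fix N show "(\<Sum>j. g (j + N)) = suminf g - (\<Sum>i<N. g i)"
      using suminf_split_initial_segment[OF g, of N] by linarith
  qed
  moreover have "(\<lambda>N. suminf g - (\<Sum>i<N. g i)) \<longlonglongrightarrow> suminf g - suminf g"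
    by (intro tendsto_intros summable_LIMSEQ g)
  ultimately show ?thesis by simp
qed

lemma ulim_gen:
  fixes f :: "nat \<Rightarrow> complex \<Rightarrow> complex" and g :: "nat \<Rightarrow> real"
  assumes bnd: "\<And>z N M. z \<in> X \<Longrightarrow> N \<le> M \<Longrightarrow> dist (f M z) (f N z) \<le> C * (\<Sum>j\<in>{N..<M}. g j)"
    and g: "summable g" "\<And>j. g j \<ge> 0" and C: "C > 0"
  shows "uniform_limit X f (\<lambda>z. lim (\<lambda>N. f N z)) sequentially"
    and "\<And>z N. z \<in> X \<Longrightarrow> dist (lim (\<lambda>N. f N z)) (f N z) \<le> C * tail g N"
proof -
  have uc: "uniformly_Cauchy_on X f"
  proof (rule uniformly_Cauchy_onI')
    fix e :: real assume e: "e > 0"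
    hence "e / C > 0" using C by simp
    from g(1)[unfolded summable_Cauchy, rule_format, OF this] obtain N where
      N: "\<And>m n. m \<ge> N \<Longrightarrow> norm (sum g {m..<n}) < e / C" by blast
    show "\<exists>M. \<forall>x\<in>X. \<forall>m\<ge>M. \<forall>n>m. dist (f m x) (f n x) < e"
    proof (intro exI ballI allI impI)
      fix x m n assume x: "x \<in> X" and m: "N \<le> m" and mn: "m < n"
      have "dist (f m x) (f n x) \<le> C * (\<Sum>j\<in>{m..<n}. g j)"
        using bnd[OF x, of m n] mn by (simp add: dist_commute)
      also have "\<dots> < C * (e / C)"
        using N[OF m, of n] C g(2) by (intro mult_strict_left_mono) (auto simp: sum_nonneg)
      also have "\<dots> = e" using C by simp
      finally show "dist (f m x) (f n x) < e" .
    qed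
  qed
  show ul: "uniform_limit X f (\<lambda>z. lim (\<lambda>N. f N z)) sequentially"
    using Cauchy_uniformly_convergent[OF uc] uniformly_convergent_uniform_limit_iff by blast
  fix z N assume z: "z \<in> X"
  have t: "(\<lambda>M. f M z) \<longlonglongrightarrow> lim (\<lambda>N. f N z)"
    using tendsto_uniform_limitI[OF ul z] .
  have "(\<lambda>M. dist (f M z) (f N z)) \<longlonglongrightarrow> dist (lim (\<lambda>N. f N z)) (f N z)"
    by (intro tendsto_intros t)
  moreover have "\<exists>N0. \<forall>M\<ge>N0. dist (f M z) (f N z) \<le> C * tail g N"
  proof (intro exI allI impI)
    fix M assume "N \<le> M"
    hence "dist (f M z) (f N z) \<le> C * (\<Sum>j\<in>{N..<M}. g j)" using bnd[OF z] by blast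
    also have "\<dots> \<le> C * tail g N" using sum_le_tail[OF g \<open>N \<le> M\<close>] C by simp
    finally show "dist (f M z) (f N z) \<le> C * tail g N" .
  qed
  ultimately show "dist (lim (\<lambda>N. f N z)) (f N z) \<le> C * tail g N"
    by (rule LIMSEQ_le_const2)
qed

context psi_setup begin

definition aL :: "int \<Rightarrow> complex \<Rightarrow> complex" where
  "aL n z = lim (\<lambda>N. fst (Y z (int N) n))"
definition bL :: "int \<Rightarrow> complex \<Rightarrow> complex" where
  "bL n z = lim (\<lambda>N. snd (Y z (int N) n))"

definition gu :: "nat \<Rightarrow> real" where "gu j = cmod (u (int j))"

lemma gu_summable: "summable gu" using Hu unfolding Hs_def gu_def by blast
lemma gu_nonneg: "gu j \<ge> 0" unfolding gu_def by simp

lemma E_pos: "E > 0" using E_ge1 by simp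

lemma Yd_fst: "cmod z \<le> 1 \<Longrightarrow> N \<le> M \<Longrightarrow>
   dist (fst (Y z (int M) n)) (fst (Y z (int N) n)) \<le> E * (\<Sum>j\<in>{N..<M}. gu j)"
  using Y_diff[of z N M n] unfolding nd_def dist_norm gu_def
  by (smt (verit) norm_ge_zero)
lemma Yd_snd: "cmod z \<le> 1 \<Longrightarrow> N \<le> M \<Longrightarrow>
   dist (snd (Y z (int M) n)) (snd (Y z (int N) n)) \<le> E * (\<Sum>j\<in>{N..<M}. gu j)"
  using Y_diff[of z N M n] unfolding nd_def dist_norm gu_def
  by (smt (verit) norm_ge_zero)

lemma aL_ulim: "uniform_limit (cball 0 1) (\<lambda>N z. fst (Y z (int N) n)) (aL n) sequentially"
  and aL_bound: "z \<in> cball 0 1 \<Longrightarrow> dist (aL n z) (fst (Y z (int N) n)) \<le> E * tail gu N"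
proof -
  note r = ulim_gen[of "cball 0 1" "\<lambda>N z. fst (Y z (int N) n)" E gu, OF Yd_fst gu_summable gu_nonneg E_pos]
  show "uniform_limit (cball 0 1) (\<lambda>N z. fst (Y z (int N) n)) (aL n) sequentially"
    using r(1) unfolding aL_def[abs_def] by simp
  show "z \<in> cball 0 1 \<Longrightarrow> dist (aL n z) (fst (Y z (int N) n)) \<le> E * tail gu N"
    using r(2) unfolding aL_def by simp
qed

lemma bL_ulim: "uniform_limit (cball 0 1) (\<lambda>N z. snd (Y z (int N) n)) (bL n) sequentially"
  and bL_bound: "z \<in> cball 0 1 \<Longrightarrow> dist (bL n z) (snd (Y z (int N) n)) \<le> E * tail gu N"
proof -
  note r = ulim_gen[of "cball 0 1" "\<lambda>N z. snd (Y z (int N) n)" E gu, OF Yd_snd gu_summable gu_nonneg E_pos]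
  show "uniform_limit (cball 0 1) (\<lambda>N z. snd (Y z (int N) n)) (bL n) sequentially"
    using r(1) unfolding bL_def[abs_def] by simp
  show "z \<in> cball 0 1 \<Longrightarrow> dist (bL n z) (snd (Y z (int N) n)) \<le> E * tail gu N"
    using r(2) unfolding bL_def by simp
qed

lemma aL_tendsto: "cmod z \<le> 1 \<Longrightarrow> (\<lambda>N. fst (Y z (int N) n)) \<longlonglongrightarrow> aL n z"
  using tendsto_uniform_limitI[OF aL_ulim, of z] by simp
lemma bL_tendsto: "cmod z \<le> 1 \<Longrightarrow> (\<lambda>N. snd (Y z (int N) n)) \<longlonglongrightarrow> bL n z"
  using tendsto_uniform_limitI[OF bL_ulim, of z] by simp

lemma aL_holo: "continuous_on (cball 0 1) (aL n) \<and> aL n holomorphic_on ball 0 1"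
proof -
  have "eventually (\<lambda>N. continuous_on (cball 0 1) (\<lambda>z. fst (Y z (int N) n)) \<and>
          (\<lambda>z. fst (Y z (int N) n)) holomorphic_on ball 0 1) sequentially"
    using Y_holo(1) by (auto intro!: always_eventually holomorphic_on_imp_continuous_on
        intro: holomorphic_on_subset)
  from holomorphic_uniform_limit[OF this aL_ulim] show ?thesis by auto
qed

lemma bL_holo: "continuous_on (cball 0 1) (bL n) \<and> bL n holomorphic_on ball 0 1"
proof -
  have "eventually (\<lambda>N. continuous_on (cball 0 1) (\<lambda>z. snd (Y z (int N) n)) \<and>
          (\<lambda>z. snd (Y z (int N) n)) holomorphic_on ball 0 1) sequentially"
    using Y_holo(2) by (auto intro!: always_eventually holomorphic_on_imp_continuous_on
        intro: holomorphic_on_subset)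
  from holomorphic_uniform_limit[OF this bL_ulim] show ?thesis by auto
qed

lemma L_rec:
  assumes z: "cmod z \<le> 1"
  shows "aL n z = z^2 * (aL (n+1) z + u n * bL (n+1) z)"
    and "bL n z = v n * aL (n+1) z + bL (n+1) z"
proof -
  have ev: "eventually (\<lambda>N. n < int N) sequentially"
  proof -
    have "eventually (\<lambda>N. nat (n+1) \<le> N) sequentially" by (rule eventually_ge_at_top)
    thus ?thesis by (rule eventually_mono) auto
  qed
  have "(\<lambda>N. z^2 * (fst (Y z (int N) (n+1)) + u n * snd (Y z (int N) (n+1))))
          \<longlonglongrightarrow> z^2 * (aL (n+1) z + u n * bL (n+1) z)"
    by (intro tendsto_intros aL_tendsto bL_tendsto z)
  moreover have "eventually (\<lambda>N. z^2 * (fst (Y z (int N) (n+1)) + u n * snd (Y z (int N) (n+1)))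
       = fst (Y z (int N) n)) sequentially"
    using ev by (rule eventually_mono) (simp add: Y_step[of n] stp_def)
  ultimately have "(\<lambda>N. fst (Y z (int N) n)) \<longlonglongrightarrow> z^2 * (aL (n+1) z + u n * bL (n+1) z)"
    by (rule Lim_transform_eventually)
  thus "aL n z = z^2 * (aL (n+1) z + u n * bL (n+1) z)"
    using aL_tendsto[OF z] LIMSEQ_unique by blast
  have "(\<lambda>N. v n * fst (Y z (int N) (n+1)) + snd (Y z (int N) (n+1)))
          \<longlonglongrightarrow> v n * aL (n+1) z + bL (n+1) z"
    by (intro tendsto_intros aL_tendsto bL_tendsto z)
  moreover have "eventually (\<lambda>N. v n * fst (Y z (int N) (n+1)) + snd (Y z (int N) (n+1))
       = snd (Y z (int N) n)) sequentially"
    using ev by (rule eventually_mono) (simp add: Y_step[of n] stp_def)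
  ultimately have "(\<lambda>N. snd (Y z (int N) n)) \<longlonglongrightarrow> v n * aL (n+1) z + bL (n+1) z"
    by (rule Lim_transform_eventually)
  thus "bL n z = v n * aL (n+1) z + bL (n+1) z"
    using bL_tendsto[OF z] LIMSEQ_unique by blast
qed

lemma L_bound:
  assumes z: "cmod z \<le> 1"
  shows "cmod (aL n z) + cmod (bL n z) \<le> E"
proof -
  have "(\<lambda>N. cmod (fst (Y z (int N) n)) + cmod (snd (Y z (int N) n))) \<longlonglongrightarrow> cmod (aL n z) + cmod (bL n z)"
    by (intro tendsto_intros aL_tendsto bL_tendsto z)
  moreover have "\<exists>N0. \<forall>N\<ge>N0. cmod (fst (Y z (int N) n)) + cmod (snd (Y z (int N) n)) \<le> E"
    using Y_bound[OF z] by (auto simp: nd_def)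
  ultimately show ?thesis by (rule LIMSEQ_le_const2)
qed

lemma aL_le: "cmod z \<le> 1 \<Longrightarrow> cmod (aL n z) \<le> E"
  using L_bound[of z n] norm_ge_zero[of "bL n z"] by linarith
lemma bL_le: "cmod z \<le> 1 \<Longrightarrow> cmod (bL n z) \<le> E"
  using L_bound[of z n] norm_ge_zero[of "aL n z"] by linarith

lemma L_top:
  assumes z: "cmod z \<le> 1" and n: "n \<ge> 0"
  shows "cmod (aL n z) \<le> E * tail gu (nat n)" and "cmod (bL n z - 1) \<le> E * tail gu (nat n)"
proof -
  have Y0: "Y z (int (nat n)) n = (0,1)" using n by (simp add: Y_ge)
  show "cmod (aL n z) \<le> E * tail gu (nat n)"
    using aL_bound[of z n "nat n"] z Y0 by (simp add: dist_norm)
  show "cmod (bL n z - 1) \<le> E * tail gu (nat n)"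
    using bL_bound[of z n "nat n"] z Y0 by (simp add: dist_norm)
qed

end

lemma alg1: "a = z^2 * (a' + w * b') \<Longrightarrow> P * a = z * (P * z * a') + z * w * (P * z * (b'::complex))"
  by (simp add: algebra_simps power2_eq_square)
lemma alg2: "(z::complex) \<noteq> 0 \<Longrightarrow> b = v * a' + b' \<Longrightarrow> P * b = v * (P * z * a') / z + P * z * b' / z"
  by (simp add: field_simps)
lemma alg3: "(z::complex) \<noteq> 0 \<Longrightarrow> Q \<noteq> 0 \<Longrightarrow> (z * x + z * w * y) / Q = z^2 * (x / (Q * z) + w * (y / (Q * z)))"
  by (simp add: field_simps power2_eq_square)
lemma alg4: "(z::complex) \<noteq> 0 \<Longrightarrow> Q \<noteq> 0 \<Longrightarrow> (v * x / z + y / z) / Q = v * (x / (Q*z)) + y / (Q*z)"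
  by (simp add: field_simps)

lemma tendsto_bot_int:
  fixes f :: "int \<Rightarrow> 'a::metric_space"
  assumes "\<And>n. n \<le> 0 \<Longrightarrow> dist (f n) L \<le> h (nat (-n))" "h \<longlonglongrightarrow> 0"
  shows "(f \<longlongrightarrow> L) at_bot"
proof (rule tendstoI)
  fix e :: real assume e: "e > 0"
  from assms(2)[unfolded LIMSEQ_iff, rule_format, OF e] obtain N where
    N: "\<And>n. n \<ge> N \<Longrightarrow> norm (h n - 0) < e" by blast
  show "eventually (\<lambda>n. dist (f n) L < e) at_bot"
    unfolding eventually_at_bot_linorder
  proof (intro exI allI impI)
    fix n assume "n \<le> - int N"
    hence "n \<le> 0" "nat (-n) \<ge> N" by auto
    thus "dist (f n) L < e" using assms(1)[of n] N[of "nat (-n)"] by simp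
  qed
qed

lemma tendsto_top_int:
  fixes f :: "int \<Rightarrow> 'a::metric_space"
  assumes "\<And>n. n \<ge> 0 \<Longrightarrow> dist (f n) L \<le> h (nat n)" "h \<longlonglongrightarrow> 0"
  shows "(f \<longlongrightarrow> L) at_top"
proof (rule tendstoI)
  fix e :: real assume e: "e > 0"
  from assms(2)[unfolded LIMSEQ_iff, rule_format, OF e] obtain N where
    N: "\<And>n. n \<ge> N \<Longrightarrow> norm (h n - 0) < e" by blast
  show "eventually (\<lambda>n. dist (f n) L < e) at_top"
    unfolding eventually_at_top_linorder
  proof (intro exI allI impI)
    fix n assume "n \<ge> int N"
    hence "n \<ge> 0" "nat n \<ge> N" by auto
    thus "dist (f n) L < e" using assms(1)[of n] N[of "nat n"] by simp
  qed
qed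

context psi_setup begin

definition gv :: "nat \<Rightarrow> real" where "gv j = cmod (v (- int j - 1))"

lemma gv_summable: "summable gv"
proof -
  have "summable (\<lambda>j. cmod (v (- int j)))" using Hv unfolding Hs_def by blast
  hence "summable (\<lambda>j. cmod (v (- int (Suc j))))" by (subst summable_Suc_iff)
  moreover have "(\<lambda>j. cmod (v (- int (Suc j)))) = gv"
    unfolding gv_def by (intro ext arg_cong[where f="\<lambda>k. cmod (v k)"]) simp
  ultimately show ?thesis by simp
qed
lemma gv_nonneg: "gv j \<ge> 0" unfolding gv_def by simp

lemma bL_diff:
  assumes z: "cmod z \<le> 1" and NM: "N \<le> M"
  shows "dist (bL (- int M) z) (bL (- int N) z) \<le> E * (\<Sum>j\<in>{N..<M}. gv j)"
  using NM
proof (induction M)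
  case 0 thus ?case by simp
next
  case (Suc M)
  show ?case
  proof (cases "N = Suc M")
    case True thus ?thesis by simp
  next
    case False
    hence NM: "N \<le> M" using Suc.prems by simp
    have r: "bL (- int M - 1) z = v (- int M - 1) * aL (- int M) z + bL (- int M) z"
      using L_rec(2)[OF z, of "- int M - 1"] by simp
    have eq: "- int (Suc M) = - int M - 1" by simp
    have "dist (bL (- int (Suc M)) z) (bL (- int N) z)
        \<le> dist (bL (- int M - 1) z) (bL (- int M) z) + dist (bL (- int M) z) (bL (- int N) z)"
      unfolding eq by (rule dist_triangle)
    also have "dist (bL (- int M - 1) z) (bL (- int M) z) = cmod (v (- int M - 1) * aL (- int M) z)"
      using r by (simp add: dist_norm)
    also have "\<dots> \<le> E * gv M"
      unfolding gv_def norm_mult using aL_le[OF z] E_pos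
      by (metis mult.commute mult_left_mono norm_ge_zero)
    finally show ?thesis using Suc.IH[OF NM] NM by (simp add: algebra_simps)
  qed
qed

definition BL :: "complex \<Rightarrow> complex" where
  "BL z = lim (\<lambda>N. bL (- int N) z)"

lemma BL_ulim: "uniform_limit (cball 0 1) (\<lambda>N z. bL (- int N) z) BL sequentially"
  and BL_bound: "z \<in> cball 0 1 \<Longrightarrow> dist (BL z) (bL (- int N) z) \<le> E * tail gv N"
proof -
  note r = ulim_gen[of "cball 0 1" "\<lambda>N z. bL (- int N) z" E gv, OF _ gv_summable gv_nonneg E_pos]
  have h: "\<And>z N M. z \<in> cball 0 1 \<Longrightarrow> N \<le> M \<Longrightarrow> dist (bL (- int M) z) (bL (- int N) z) \<le> E * (\<Sum>j\<in>{N..<M}. gv j)"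
    using bL_diff by auto
  show "uniform_limit (cball 0 1) (\<lambda>N z. bL (- int N) z) BL sequentially"
    using r(1)[OF h] unfolding BL_def[abs_def] by simp
  show "z \<in> cball 0 1 \<Longrightarrow> dist (BL z) (bL (- int N) z) \<le> E * tail gv N"
    using r(2)[OF h] unfolding BL_def by simp
qed

lemma BL_holo: "continuous_on (cball 0 1) BL \<and> BL holomorphic_on ball 0 1"
proof -
  have "eventually (\<lambda>N. continuous_on (cball 0 1) (\<lambda>z. bL (- int N) z) \<and>
          (\<lambda>z. bL (- int N) z) holomorphic_on ball 0 1) sequentially"
    using bL_holo by (auto intro!: always_eventually)
  from holomorphic_uniform_limit[OF this BL_ulim] show ?thesis by auto
qed

lemma bL_bot:
  assumes z: "cmod z \<le> 1"
  shows "((\<lambda>n. bL n z) \<longlongrightarrow> BL z) at_bot"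
proof (rule tendsto_bot_int)
  show "(\<lambda>N. E * tail gv N) \<longlonglongrightarrow> 0"
    using tendsto_mult_right_zero[OF tail_lim[OF gv_summable]] by simp
  fix n :: int assume "n \<le> 0"
  hence "n = - int (nat (-n))" by simp
  thus "dist (bL n z) (BL z) \<le> E * tail gv (nat (- n))"
    using BL_bound[of z "nat (-n)"] z by (metis dist_commute mem_cball_0)
qed

lemma aL_top:
  assumes z: "cmod z \<le> 1"
  shows "((\<lambda>n. aL n z) \<longlongrightarrow> 0) at_top" and "((\<lambda>n. bL n z) \<longlongrightarrow> 1) at_top"
proof -
  have t: "(\<lambda>N. E * tail gu N) \<longlonglongrightarrow> 0"
    using tendsto_mult_right_zero[OF tail_lim[OF gu_summable]] by simp
  show "((\<lambda>n. aL n z) \<longlongrightarrow> 0) at_top"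
    by (rule tendsto_top_int[OF _ t]) (use L_top(1)[OF z] in \<open>simp add: dist_norm\<close>)
  show "((\<lambda>n. bL n z) \<longlongrightarrow> 1) at_top"
    by (rule tendsto_top_int[OF _ t]) (use L_top(2)[OF z] in \<open>simp add: dist_norm\<close>)
qed

lemma psi_solves:
  assumes z: "cmod z = 1"
  shows "solves_sys u v z (\<lambda>n. z powi n * aL n z) (\<lambda>n. z powi n * bL n z)"
  unfolding solves_sys_def
proof (intro allI conjI)
  fix n
  have z0: "z \<noteq> 0" using z by auto
  have zp: "z powi (n+1) = z powi n * z" using z0 by (simp add: power_int_add)
  show "z powi n * aL n z = z * (z powi (n + 1) * aL (n + 1) z) + z * u n * (z powi (n + 1) * bL (n + 1) z)"
    unfolding zp by (rule alg1) (use L_rec(1)[of z n] z in simp)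
  show "z powi n * bL n z = v n * (z powi (n + 1) * aL (n + 1) z) / z + z powi (n + 1) * bL (n + 1) z / z"
    unfolding zp by (rule alg2[OF z0]) (use L_rec(2)[of z n] z in simp)
qed

lemma psi_jost:
  assumes z: "cmod z = 1"
  shows "jost_psi u v z (\<lambda>n. z powi n * aL n z) (\<lambda>n. z powi n * bL n z)"
proof -
  have z0: "z \<noteq> 0" using z by auto
  have n1: "cmod (z powi n) = 1" for n using z by (simp add: norm_power_int)
  have "((\<lambda>n. z powi n * aL n z) \<longlongrightarrow> 0) at_top"
    using aL_top(1)[of z] z by (subst tendsto_norm_zero_iff[symmetric]) (simp add: norm_mult n1 tendsto_norm_zero)
  moreover have "((\<lambda>n. z powi n * bL n z / z powi n) \<longlongrightarrow> 1) at_top"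
    using aL_top(2)[of z] z z0 by simp
  ultimately show ?thesis unfolding jost_psi_def using psi_solves[OF z] by blast
qed

lemma psi_unique:
  assumes z: "cmod z = 1" and J: "jost_psi u v z xi eta"
  shows "eta n / z powi n = bL n z"
proof -
  have z0: "z \<noteq> 0" using z by auto
  have n1: "cmod (z powi n) = 1" for n using z by (simp add: norm_power_int)
  define p where "p n = (xi n / z powi n, eta n / z powi n)" for n
  define q where "q n = (aL n z, bL n z)" for n
  have S: "solves_sys u v z xi eta" and xi0: "(xi \<longlongrightarrow> 0) at_top"
    and eta1: "((\<lambda>n. eta n / z powi n) \<longlongrightarrow> 1) at_top"
    using J unfolding jost_psi_def by blast+
  have zp: "z powi (k+1) = z powi k * z" for k using z0 by (simp add: power_int_add)
  have prec: "p k = stp k z (p (k+1))" for k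
  proof -
    have e1: "xi k = z * xi (k+1) + z * u k * eta (k+1)" and e2: "eta k = v k * xi (k+1) / z + eta (k+1) / z"
      using S unfolding solves_sys_def by blast+
    have zk: "z powi k \<noteq> 0" using z0 by simp
    show ?thesis unfolding p_def stp_def fst_conv snd_conv zp e1 e2
      using alg3[OF z0 zk] alg4[OF z0 zk] by simp
  qed
  have qrec: "q k = stp k z (q (k+1))" for k
    unfolding q_def stp_def using L_rec[of z k] z by simp
  have lim0: "((\<lambda>M. nd (p M) (q M)) \<longlongrightarrow> 0) at_top"
  proof -
    have a: "((\<lambda>M. xi M / z powi M - aL M z) \<longlongrightarrow> 0 - 0) at_top"
    proof (intro tendsto_intros)
      show "((\<lambda>M. xi M / z powi M) \<longlongrightarrow> 0) at_top"
        using xi0 by (subst tendsto_norm_zero_iff[symmetric]) (simp add: norm_divide n1 tendsto_norm_zero)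
      show "((\<lambda>M. aL M z) \<longlongrightarrow> 0) at_top" using aL_top(1)[of z] z by simp
    qed
    have b: "((\<lambda>M. eta M / z powi M - bL M z) \<longlongrightarrow> 1 - 1) at_top"
      by (intro tendsto_intros eta1) (use aL_top(2)[of z] z in simp)
    have "((\<lambda>M. cmod (xi M / z powi M - aL M z) + cmod (eta M / z powi M - bL M z)) \<longlongrightarrow> 0 + 0) at_top"
      using a b by (intro tendsto_add tendsto_norm_zero) auto
    thus ?thesis unfolding nd_def p_def q_def by simp
  qed
  have le: "eventually (\<lambda>M. nd (p n) (q n) \<le> E * nd (p M) (q M)) at_top"
    using eventually_ge_at_top[of n]
  proof (rule eventually_mono)
    fix M assume "n \<le> M"
    show "nd (p n) (q n) \<le> E * nd (p M) (q M)"
    proof (rule propag[of z n M p q])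
      show "cmod z \<le> 1" using z by simp
      show "n \<le> M" by fact
      show "\<And>n'. n \<le> n' \<Longrightarrow> n' < M \<Longrightarrow> p n' = stp n' z (p (n'+1))" by (rule prec)
      show "\<And>n'. n \<le> n' \<Longrightarrow> n' < M \<Longrightarrow> q n' = stp n' z (q (n'+1))" by (rule qrec)
    qed
  qed
  have tE: "((\<lambda>M. E * nd (p M) (q M)) \<longlongrightarrow> E * 0) at_top"
    using lim0 by (rule tendsto_mult_left)
  have "nd (p n) (q n) \<le> E * 0"
    by (rule tendsto_le[OF _ tE tendsto_const le]) simp
  hence nd0: "nd (p n) (q n) = 0" using nd_nonneg[of "p n" "q n"] by simp
  have "cmod (snd (p n) - snd (q n)) = 0"
    using nd0 norm_ge_zero[of "fst (p n) - fst (q n)"] norm_ge_zero[of "snd (p n) - snd (q n)"]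
    unfolding nd_def by linarith
  hence "snd (p n) = snd (q n)" by simp
  thus ?thesis unfolding p_def q_def by simp
qed

lemma invTl_BL:
  assumes z: "cmod z = 1"
  shows "invTl_at u v z (BL z)"
  unfolding invTl_at_def
proof (intro conjI allI impI)
  show "\<exists>xi eta. jost_psi u v z xi eta" using psi_jost[OF z] by blast
  fix xi eta assume J: "jost_psi u v z xi eta"
  have "(\<lambda>n. eta n / z powi n) = (\<lambda>n. bL n z)" using psi_unique[OF z J] by auto
  thus "((\<lambda>n. eta n / z powi n) \<longlongrightarrow> BL z) at_bot" using bL_bot[of z] z by simp
qed

end

lemma sum_tendsto_int:
  fixes f :: "int \<Rightarrow> complex"
  assumes f: "f summable_on UNIV"
    and ev: "\<And>X. finite X \<Longrightarrow> eventually (\<lambda>N. X \<subseteq> A N) sequentially"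
    and fin: "\<And>N. finite (A N)"
  shows "(\<lambda>N. sum f (A N)) \<longlonglongrightarrow> infsum f UNIV"
proof -
  have t: "(sum f \<longlongrightarrow> infsum f UNIV) (finite_subsets_at_top UNIV)"
    using has_sum_infsum[OF f] unfolding has_sum_def .
  have fl: "filterlim A (finite_subsets_at_top UNIV) sequentially"
    unfolding filterlim_finite_subsets_at_top
    using ev fin by (auto elim!: eventually_mono)
  show ?thesis using filterlim_compose[OF t fl] .
qed

lemma ev_interval:
  fixes X :: "int set"
  assumes "finite X"
  shows "eventually (\<lambda>N. X \<subseteq> {- int N..<int N - 1}) sequentially"
proof -
  define M where "M = (\<Sum>x\<in>X. \<bar>x\<bar>)"
  have xM: "\<bar>x\<bar> \<le> M" if "x \<in> X" for x
    unfolding M_def using assms that by (intro member_le_sum) auto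
  have "eventually (\<lambda>N. nat M + 2 \<le> N) sequentially" by (rule eventually_ge_at_top)
  thus ?thesis
  proof (rule eventually_mono)
    fix N assume "nat M + 2 \<le> N"
    hence "M + 2 \<le> int N" by linarith
    thus "X \<subseteq> {- int N..<int N - 1}" using xM by fastforce
  qed
qed

context psi_setup begin

lemma U_summable_on: "U summable_on UNIV"
proof (rule nonneg_bdd_above_summable_on)
  show "bdd_above (sum U ` {F. F \<subseteq> UNIV \<and> finite F})"
    using sumU_le by (auto intro!: bdd_aboveI[of _ sig])
qed (simp add: U_nonneg)

lemma uv_summable_on: "(\<lambda>k. u (k+1) * v k) summable_on UNIV"
proof (rule abs_summable_summable)
  have "(\<lambda>k. sig * U k) summable_on UNIV"
    using U_summable_on by (rule summable_on_cmult_right)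
  thus "(\<lambda>k. norm (u (k+1) * v k)) summable_on UNIV"
  proof (rule summable_on_comparison_test)
    fix k :: int
    have "cmod (u (k+1)) * cmod (v k) \<le> sig * cmod (v k)"
      by (rule mult_right_mono[OF u_le]) simp
    also have "\<dots> \<le> sig * U k" using sig_nonneg by (intro mult_left_mono) (auto simp: U_def)
    finally show "norm (u (k+1) * v k) \<le> sig * U k" by (simp add: norm_mult)
  qed simp
qed

definition S :: complex where "S = (\<Sum>\<^sub>\<infinity>k. u (k+1) * v k)"

lemma S_tendsto: "(\<lambda>N. \<Sum>k\<in>{- int N..<int N - 1}. v k * u (k+1)) \<longlonglongrightarrow> S"
  unfolding S_def using sum_tendsto_int[OF uv_summable_on ev_interval]
  by (simp add: mult.commute)

definition K1 :: real where "K1 = E * (1 + sig)"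

lemma K1_nonneg: "K1 \<ge> 0" unfolding K1_def using E_pos sig_nonneg by simp

lemma F1:
  assumes z: "cmod z \<le> 1"
  shows "cmod (fst (Y z N n)) \<le> cmod z ^ 2 * K1"
proof (cases "N \<le> n")
  case True thus ?thesis using K1_nonneg by (simp add: Y_ge)
next
  case False
  define a where "a = fst (Y z N (n+1))"
  define b where "b = snd (Y z N (n+1))"
  have ab: "cmod a + cmod b \<le> E" using Y_bound[OF z, of N "n+1"] unfolding a_def b_def nd_def by simp
  have "fst (Y z N n) = z^2 * (a + u n * b)" using False by (simp add: Y_step stp_def a_def b_def)
  hence "cmod (fst (Y z N n)) = cmod z ^ 2 * cmod (a + u n * b)" by (simp add: norm_mult norm_power)
  also have "\<dots> \<le> cmod z ^ 2 * K1"
  proof (rule mult_left_mono)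
    have "cmod (a + u n * b) \<le> cmod a + cmod (u n) * cmod b" by (metis norm_mult norm_triangle_ineq)
    also have "\<dots> \<le> cmod a + sig * cmod b" using u_le[of n] by (simp add: mult_right_mono)
    also have "\<dots> \<le> (1 + sig) * (cmod a + cmod b)" using sig_nonneg by (simp add: algebra_simps)
    also have "\<dots> \<le> (1 + sig) * E" using ab sig_nonneg by (simp add: mult_left_mono)
    finally show "cmod (a + u n * b) \<le> K1" unfolding K1_def by (simp add: mult.commute)
  qed simp
  finally show ?thesis .
qed

lemma F2_aux:
  "N - n = int k \<Longrightarrow> snd (Y z N n) = 1 + (\<Sum>j\<in>{n..<N}. v j * fst (Y z N (j+1)))"
proof (induction k arbitrary: n)
  case 0 thus ?case by (simp add: Y_ge)
next
  case (Suc k)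
  hence nN: "n < N" by simp
  have IH: "snd (Y z N (n+1)) = 1 + (\<Sum>j\<in>{n+1..<N}. v j * fst (Y z N (j+1)))"
    using Suc by simp
  have "{n..<N} = insert n {n+1..<N}" using nN by auto
  hence "(\<Sum>j\<in>{n..<N}. v j * fst (Y z N (j+1))) = v n * fst (Y z N (n+1)) + (\<Sum>j\<in>{n+1..<N}. v j * fst (Y z N (j+1)))"
    by simp
  thus ?case using nN IH by (simp add: Y_step[of n N] stp_def)
qed

lemma F2: "n \<le> N \<Longrightarrow> snd (Y z N n) = 1 + (\<Sum>j\<in>{n..<N}. v j * fst (Y z N (j+1)))"
  using F2_aux[of N n "nat (N - n)"] by simp

lemma F2b:
  assumes z: "cmod z \<le> 1"
  shows "cmod (snd (Y z N n) - 1) \<le> sig * (cmod z ^ 2 * K1)"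
proof (cases "n \<le> N")
  case False thus ?thesis using K1_nonneg sig_nonneg by (simp add: Y_ge)
next
  case True
  have "cmod (snd (Y z N n) - 1) = cmod (\<Sum>j\<in>{n..<N}. v j * fst (Y z N (j+1)))"
    using F2[OF True] by simp
  also have "\<dots> \<le> (\<Sum>j\<in>{n..<N}. cmod (v j) * (cmod z ^ 2 * K1))"
    by (rule sum_norm_le) (simp add: norm_mult F1[OF z] mult_left_mono)
  also have "\<dots> = (\<Sum>j\<in>{n..<N}. cmod (v j)) * (cmod z ^ 2 * K1)"
    by (simp add: sum_distrib_right)
  also have "\<dots> \<le> sig * (cmod z ^ 2 * K1)"
  proof (rule mult_right_mono)
    have "(\<Sum>j\<in>{n..<N}. cmod (v j)) \<le> sum U {n..<N}"
      by (intro sum_mono) (simp add: U_def)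
    also have "\<dots> \<le> sig" by (rule sumU_le) simp
    finally show "(\<Sum>j\<in>{n..<N}. cmod (v j)) \<le> sig" .
  qed (use K1_nonneg in simp)
  finally show ?thesis .
qed

definition K :: real where "K = sig * (K1 * (1 + sig^2))"

lemma F3:
  assumes z: "cmod z \<le> 1" and k: "k + 1 < N"
  shows "cmod (fst (Y z N (k+1)) - z^2 * u (k+1)) \<le> cmod z ^ 4 * (K1 * (1 + sig^2))"
proof -
  define a where "a = fst (Y z N (k+2))"
  define b where "b = snd (Y z N (k+2))"
  have ys: "Y z N (k+1) = stp (k+1) z (Y z N (k+2))"
    using Y_step[of "k+1" N z] k by (simp add: add.assoc)
  have e: "fst (Y z N (k+1)) - z^2 * u (k+1) = z^2 * (a + u (k+1) * (b - 1))"
    unfolding ys by (simp add: stp_def a_def b_def algebra_simps)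
  have ia: "cmod a \<le> cmod z ^ 2 * K1" unfolding a_def by (rule F1[OF z])
  have ib: "cmod (b - 1) \<le> sig * (cmod z ^ 2 * K1)" unfolding b_def by (rule F2b[OF z])
  have "cmod (a + u (k+1) * (b - 1)) \<le> cmod a + cmod (u (k+1)) * cmod (b - 1)"
    by (metis norm_mult norm_triangle_ineq)
  also have "\<dots> \<le> cmod z ^ 2 * K1 + sig * (sig * (cmod z ^ 2 * K1))"
    using ia ib u_le[of "k+1"] sig_nonneg by (intro add_mono mult_mono) auto
  also have "\<dots> = cmod z ^ 2 * (K1 * (1 + sig^2))" by (simp add: algebra_simps power2_eq_square)
  finally have "cmod (a + u (k+1) * (b - 1)) \<le> cmod z ^ 2 * (K1 * (1 + sig^2))" .
  hence "cmod z ^ 2 * cmod (a + u (k+1) * (b - 1)) \<le> cmod z ^ 2 * (cmod z ^ 2 * (K1 * (1 + sig^2)))"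
    by (intro mult_left_mono) auto
  moreover have "cmod z ^ 2 * (cmod z ^ 2 * (K1 * (1 + sig^2))) = cmod z ^ 4 * (K1 * (1 + sig^2))"
    by (simp add: power4_eq_xxxx power2_eq_square)
  ultimately show ?thesis unfolding e by (simp add: norm_mult norm_power)
qed

lemma F4:
  assumes z: "cmod z \<le> 1" and nN: "n < N"
  shows "cmod (snd (Y z N n) - 1 - z^2 * (\<Sum>k\<in>{n..<N-1}. v k * u (k+1))) \<le> K * cmod z ^ 4"
proof -
  have s1: "{n..<N} = insert (N-1) {n..<N-1}" using nN by auto
  have "snd (Y z N n) - 1 = (\<Sum>j\<in>{n..<N-1}. v j * fst (Y z N (j+1))) + v (N-1) * fst (Y z N N)"
    using F2[of n N z] nN s1 by (simp add: add.commute)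
  also have "fst (Y z N N) = 0" by (simp add: Y_ge)
  finally have e: "snd (Y z N n) - 1 - z^2 * (\<Sum>k\<in>{n..<N-1}. v k * u (k+1))
     = (\<Sum>j\<in>{n..<N-1}. v j * (fst (Y z N (j+1)) - z^2 * u (j+1)))"
    by (simp add: sum_distrib_left sum_subtractf[symmetric] algebra_simps)
  have "cmod (\<Sum>j\<in>{n..<N-1}. v j * (fst (Y z N (j+1)) - z^2 * u (j+1)))
        \<le> (\<Sum>j\<in>{n..<N-1}. cmod (v j) * (cmod z ^ 4 * (K1 * (1 + sig^2))))"
    by (rule sum_norm_le) (auto simp: norm_mult intro!: mult_left_mono F3[OF z])
  also have "\<dots> = (\<Sum>j\<in>{n..<N-1}. cmod (v j)) * (cmod z ^ 4 * (K1 * (1 + sig^2)))"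
    by (simp add: sum_distrib_right)
  also have "\<dots> \<le> sig * (cmod z ^ 4 * (K1 * (1 + sig^2)))"
  proof (rule mult_right_mono)
    have "(\<Sum>j\<in>{n..<N-1}. cmod (v j)) \<le> sum U {n..<N-1}"
      by (intro sum_mono) (simp add: U_def)
    also have "\<dots> \<le> sig" by (rule sumU_le) simp
    finally show "(\<Sum>j\<in>{n..<N-1}. cmod (v j)) \<le> sig" .
  qed (use K1_nonneg in simp)
  also have "\<dots> = K * cmod z ^ 4" unfolding K_def by (simp add: algebra_simps)
  finally show ?thesis unfolding e .
qed

lemma diag_tendsto:
  assumes z: "cmod z \<le> 1"
  shows "(\<lambda>N. snd (Y z (int N) (- int N))) \<longlonglongrightarrow> BL z"
proof -
  have b: "dist (snd (Y z (int N) (- int N))) (BL z) \<le> E * tail gv N + E * tail gu N" for N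
  proof -
    have "dist (snd (Y z (int N) (- int N))) (BL z)
         \<le> dist (bL (- int N) z) (snd (Y z (int N) (- int N))) + dist (BL z) (bL (- int N) z)"
      by (metis dist_commute dist_triangle add.commute)
    thus ?thesis using bL_bound[of z "- int N" N] BL_bound[of z N] z by simp
  qed
  have t: "(\<lambda>N. E * tail gv N + E * tail gu N) \<longlonglongrightarrow> E * 0 + E * 0"
    by (intro tendsto_intros tail_lim gv_summable gu_summable)
  show ?thesis
  proof (rule tendstoI)
    fix e :: real assume "e > 0"
    hence "eventually (\<lambda>N. dist (E * tail gv N + E * tail gu N) 0 < e) sequentially"
      using t tendstoD by fastforce
    thus "eventually (\<lambda>N. dist (snd (Y z (int N) (- int N))) (BL z) < e) sequentially"
    proof (rule eventually_mono)
      fix N assume "dist (E * tail gv N + E * tail gu N) 0 < e"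
      moreover have "E * tail gv N + E * tail gu N \<ge> 0"
        using E_pos tail_nonneg[OF gv_summable gv_nonneg] tail_nonneg[OF gu_summable gu_nonneg]
        by (simp add: add_nonneg_nonneg)
      ultimately show "dist (snd (Y z (int N) (- int N))) (BL z) < e" using b[of N] by simp
    qed
  qed
qed

lemma BL_asym:
  assumes z: "cmod z \<le> 1"
  shows "cmod (BL z - 1 - z^2 * S) \<le> K * cmod z ^ 4"
proof -
  have "(\<lambda>N. cmod (snd (Y z (int N) (- int N)) - 1 - z^2 * (\<Sum>k\<in>{- int N..<int N - 1}. v k * u (k+1))))
        \<longlonglongrightarrow> cmod (BL z - 1 - z^2 * S)"
    by (intro tendsto_intros diag_tendsto S_tendsto z)
  moreover have "\<exists>N0. \<forall>N\<ge>N0. cmod (snd (Y z (int N) (- int N)) - 1 - z^2 * (\<Sum>k\<in>{- int N..<int N - 1}. v k * u (k+1))) \<le> K * cmod z ^ 4"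
  proof (intro exI allI impI)
    fix N :: nat assume "1 \<le> N"
    hence "- int N < int N" by simp
    from F4[OF z this] show "cmod (snd (Y z (int N) (- int N)) - 1 - z^2 * (\<Sum>k\<in>{- int N..<int N - 1}. v k * u (k+1))) \<le> K * cmod z ^ 4" .
  qed
  ultimately show ?thesis by (rule LIMSEQ_le_const2)
qed

end

lemma psi_main:
  assumes "Hs p" "Hs q"
  shows "\<exists>B K. continuous_on (cball 0 1) B \<and> B holomorphic_on ball 0 1 \<and>
     (\<forall>z. cmod z = 1 \<longrightarrow> invTl_at p q z (B z)) \<and>
     (\<forall>z. cmod z \<le> 1 \<longrightarrow> cmod (B z - 1 - z^2 * (\<Sum>\<^sub>\<infinity>k. p (k+1) * q k)) \<le> K * cmod z ^ 4)"
proof -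
  interpret psi_setup p q using assms by unfold_locales
  show ?thesis
    using BL_holo invTl_BL BL_asym unfolding S_def by blast
qed

lemma T_point:
  fixes b w S :: complex
  assumes h: "cmod (b - 1 - w^2*S) \<le> K * cmod w ^ 4" and w: "cmod w \<le> r" and r1: "r \<le> 1"
    and r: "r * (K + cmod S) \<le> 1/2" and K: "K \<ge> 0"
  shows "cmod (1/b - (1 - w^2 * S)) \<le> 2*(K + (K + cmod S)*cmod S) * cmod w ^ 4"
proof -
  define x where "x = cmod w"
  have x0: "x \<ge> 0" and x1: "x \<le> 1" and xr: "x \<le> r" using w r1 by (auto simp: x_def)
  have x42: "x^4 \<le> x^2" using x0 x1 by (simp add: power_decreasing)
  have x2: "x^2 \<le> x" using x0 x1 by (simp add: power2_eq_square mult_left_le_one_le)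
  have Sn: "cmod S \<ge> 0" by simp
  have "cmod (b - 1) \<le> cmod (b - 1 - w^2*S) + cmod (w^2 * S)"
    by (metis diff_add_cancel norm_triangle_ineq)
  also have "\<dots> \<le> K * x^4 + x^2 * cmod S" using h by (simp add: x_def norm_mult norm_power)
  also have "\<dots> \<le> K * x^2 + x^2 * cmod S" using x42 K by (simp add: mult_left_mono)
  finally have b1: "cmod (b - 1) \<le> x^2 * (K + cmod S)" by (simp add: algebra_simps)
  also have "\<dots> \<le> r * (K + cmod S)" using x2 xr K by (intro mult_right_mono) auto
  also have "\<dots> \<le> 1/2" by (rule r)
  finally have "cmod (b - 1) \<le> 1/2" .
  moreover have "cmod (1::complex) \<le> cmod b + cmod (b - 1)"
    using norm_triangle_ineq4[of b "b - 1"] by simp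
  ultimately have bh: "cmod b \<ge> 1/2" by simp
  hence b0: "b \<noteq> 0" by auto
  have e0: "-(b - 1 - w^2*S) + (b - 1) * (w^2 * S) = 1 - b * (1 - w^2 * S)"
    by (simp add: algebra_simps)
  have e: "1/b - (1 - w^2 * S) = (-(b - 1 - w^2*S) + (b - 1) * (w^2 * S)) / b"
    unfolding e0 using b0 by (simp add: diff_divide_distrib)
  have "cmod (-(b - 1 - w^2*S) + (b - 1) * (w^2 * S)) \<le> cmod (b - 1 - w^2*S) + cmod (b - 1) * cmod (w^2 * S)"
    by (metis norm_minus_cancel norm_mult norm_triangle_ineq)
  also have "\<dots> \<le> K * x^4 + (x^2 * (K + cmod S)) * (x^2 * cmod S)"
  proof (rule add_mono)
    show "cmod (b - 1 - w\<^sup>2 * S) \<le> K * x ^ 4" using h by (simp add: x_def)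
    have "cmod (b-1) * (x^2 * cmod S) \<le> (x^2*(K+cmod S)) * (x^2 * cmod S)"
      by (rule mult_right_mono[OF b1]) simp
    thus "cmod (b - 1) * cmod (w\<^sup>2 * S) \<le> x\<^sup>2 * (K + cmod S) * (x\<^sup>2 * cmod S)"
      by (simp add: x_def norm_mult norm_power)
  qed
  also have "\<dots> = (K + (K + cmod S)*cmod S) * x^4" by (simp add: algebra_simps power4_eq_xxxx power2_eq_square)
  finally have num: "cmod (-(b - 1 - w^2*S) + (b - 1) * (w^2 * S)) \<le> (K + (K + cmod S)*cmod S) * x^4" .
  have "cmod (1/b - (1 - w^2 * S)) = cmod (-(b - 1 - w^2*S) + (b - 1) * (w^2 * S)) / cmod b"
    unfolding e by (simp add: norm_divide)
  also have "\<dots> \<le> ((K + (K + cmod S)*cmod S) * x^4) / (1/2)"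
    using num bh K x0 by (intro frac_le) auto
  finally show ?thesis unfolding x_def by (simp add: algebra_simps)
qed

lemma bigo_T:
  fixes B :: "complex \<Rightarrow> complex" and S :: complex
  assumes h: "\<And>z. cmod z \<le> 1 \<Longrightarrow> cmod (B z - 1 - z^2 * S) \<le> K * cmod z ^ 4"
  shows "(\<lambda>z. 1 / B z - (1 - z^2 * S)) \<in> O[at 0](\<lambda>z. z^4)"
proof -
  have hh: "cmod (B 1 - 1 - 1^2 * S) \<le> K" using h[of 1] by simp
  have K: "K \<ge> 0" by (rule order.trans[OF norm_ge_zero hh])
  define r where "r = 1 / (2 * (K + cmod S) + 2)"
  have rp: "r > 0" unfolding r_def using K by (simp add: add_nonneg_pos)
  have pos: "0 < 2 * (K + cmod S) + 2" using K by (simp add: add_nonneg_pos)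
  have r1: "r \<le> 1" unfolding r_def using pos K by (simp add: divide_le_eq)
  have r2': "(K + cmod S) / (2 * (K + cmod S) + 2) \<le> 1/2" using pos by (simp add: divide_le_eq)
  have r2: "r * (K + cmod S) \<le> 1/2" using r2' unfolding r_def by simp
  show ?thesis
  proof (rule bigoI)
    show "eventually (\<lambda>z. cmod (1 / B z - (1 - z^2 * S)) \<le> 2*(K + (K + cmod S)*cmod S) * cmod (z^4)) (at 0)"
      unfolding eventually_at
    proof (intro exI conjI ballI impI)
      show "r > 0" by (rule rp)
      fix z :: complex assume "z \<in> UNIV" "z \<noteq> 0 \<and> dist z 0 < r"
      hence zr: "cmod z \<le> r" by simp
      show "cmod (1 / B z - (1 - z^2 * S)) \<le> 2*(K + (K + cmod S)*cmod S) * cmod (z^4)"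
        using T_point[OF h[OF order.trans[OF zr r1]] zr r1 r2 K] by (simp add: norm_power)
    qed
  qed
qed

lemma bigo_T_inf:
  fixes B :: "complex \<Rightarrow> complex" and S :: complex
  assumes h: "\<And>z. cmod z \<le> 1 \<Longrightarrow> cmod (B z - 1 - z^2 * S) \<le> K * cmod z ^ 4"
  shows "(\<lambda>z. 1 / B (1/z) - (1 - S / z^2)) \<in> O[at_infinity](\<lambda>z. 1 / z^4)"
proof -
  have hh: "cmod (B 1 - 1 - 1^2 * S) \<le> K" using h[of 1] by simp
  have K: "K \<ge> 0" by (rule order.trans[OF norm_ge_zero hh])
  define r where "r = 1 / (2 * (K + cmod S) + 2)"
  have rp: "r > 0" unfolding r_def using K by (simp add: add_nonneg_pos)
  have pos: "0 < 2 * (K + cmod S) + 2" using K by (simp add: add_nonneg_pos)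
  have r1: "r \<le> 1" unfolding r_def using pos K by (simp add: divide_le_eq)
  have r2': "(K + cmod S) / (2 * (K + cmod S) + 2) \<le> 1/2" using pos by (simp add: divide_le_eq)
  have r2: "r * (K + cmod S) \<le> 1/2" using r2' unfolding r_def by simp
  show ?thesis
  proof (rule bigoI)
    show "eventually (\<lambda>z. cmod (1 / B (1/z) - (1 - S / z^2)) \<le> 2*(K + (K + cmod S)*cmod S) * cmod (1 / z^4)) at_infinity"
      unfolding eventually_at_infinity
    proof (intro exI allI impI)
      fix z :: complex assume zr: "1/r \<le> cmod z"
      have zp: "cmod z > 0" using zr rp by (smt (verit) divide_pos_pos)
      have wr: "cmod (1/z) \<le> r" using zr rp zp by (simp add: norm_divide field_simps)
      have e: "(1/z)^2 * S = S / z^2" by (simp add: field_simps)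
      show "cmod (1 / B (1/z) - (1 - S / z^2)) \<le> 2*(K + (K + cmod S)*cmod S) * cmod (1 / z^4)"
        using T_point[OF h[OF order.trans[OF wr r1]] wr r1 r2 K] unfolding e
        by (simp add: norm_power norm_divide power_one_over)
    qed
  qed
qed


lemma tendsto_mirror_bot:
  fixes f :: "int \<Rightarrow> 'a::topological_space"
  assumes "(f \<longlongrightarrow> L) at_bot" shows "((\<lambda>m. f (-m)) \<longlongrightarrow> L) at_top"
  using assms unfolding at_bot_mirror filterlim_filtermap by (simp add: o_def)

lemma tendsto_mirror_top:
  fixes f :: "int \<Rightarrow> 'a::topological_space"
  assumes "(f \<longlongrightarrow> L) at_top" shows "((\<lambda>m. f (-m)) \<longlongrightarrow> L) at_bot"
  using assms unfolding at_top_mirror filterlim_filtermap by (simp add: o_def)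

lemma powi_one_over: "((1::complex)/z) powi n = z powi (-n)"
  by (simp add: power_int_minus divide_inverse power_int_inverse)

lemma solves_swap:
  assumes z: "z \<noteq> 0"
  shows "solves_sys u v z xi eta \<longleftrightarrow> solves_sys v u (1/z) eta xi"
proof -
  have e1: "(1/z) * eta (n+1) + (1/z) * v n * xi (n+1) = v n * xi (n+1) / z + eta (n+1) / z" for n
    by (simp add: field_simps)
  have e2: "u n * eta (n+1) / (1/z) + xi (n+1) / (1/z) = z * xi (n+1) + z * u n * eta (n+1)" for n
    by (simp add: field_simps)
  show ?thesis unfolding solves_sys_def e1 e2 by blast
qed

lemma jost_psibar_swap:
  assumes z: "z \<noteq> 0"
  shows "jost_psibar u v z xi eta \<longleftrightarrow> jost_psi v u (1/z) eta xi"
  unfolding jost_psibar_def jost_psi_def solves_swap[OF z] powi_one_over by auto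

lemma jost_phibar_swap:
  assumes z: "z \<noteq> 0"
  shows "jost_phibar u v z xi eta \<longleftrightarrow> jost_phi v u (1/z) eta xi"
  unfolding jost_phibar_def jost_phi_def solves_swap[OF z] powi_one_over by auto

lemma invTlbar_swap:
  assumes z: "z \<noteq> 0"
  shows "invTlbar_at u v z c \<longleftrightarrow> invTl_at v u (1/z) c"
  unfolding invTlbar_at_def invTl_at_def jost_psibar_swap[OF z] powi_one_over by blast

lemma invTrbar_swap:
  assumes z: "z \<noteq> 0"
  shows "invTrbar_at u v z c \<longleftrightarrow> invTr_at v u (1/z) c"
  unfolding invTrbar_at_def invTr_at_def jost_phibar_swap[OF z] powi_one_over by auto

definition refl :: "(int \<Rightarrow> complex) \<Rightarrow> int \<Rightarrow> complex" where
  "refl p m = - p (- m - 1)"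

lemma Hs_refl: assumes "Hs p" shows "Hs (refl p)"
proof -
  have a: "summable (\<lambda>j. cmod (p (int j)))" and b: "summable (\<lambda>j. cmod (p (- int j)))"
    using assms unfolding Hs_def by auto
  have "summable (\<lambda>j. cmod (p (- int (Suc j))))" using b by (subst summable_Suc_iff)
  moreover have "(\<lambda>j. cmod (p (- int (Suc j)))) = (\<lambda>j. cmod (refl p (int j)))"
  proof (intro ext)
    fix j
    have e: "- 1 - int j = - int j - 1" by simp
    show "cmod (p (- int (Suc j))) = cmod (refl p (int j))" unfolding refl_def by (simp add: e)
  qed
  ultimately have 1: "summable (\<lambda>j. cmod (refl p (int j)))" by simp
  have "(\<lambda>j. cmod (refl p (- int (Suc j)))) = (\<lambda>j. cmod (p (int j)))"
    unfolding refl_def by (intro ext) simp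
  hence "summable (\<lambda>j. cmod (refl p (- int (Suc j))))" using a by simp
  hence 2: "summable (\<lambda>j. cmod (refl p (- int j)))" by (subst (asm) summable_Suc_iff)
  show ?thesis unfolding Hs_def using 1 2 by blast
qed

lemma alg_fwd:
  fixes z x0 x1 e0 e1 u v P P1 :: complex
  assumes z: "z \<noteq> 0" and h1: "x0 = z * x1 + z * u * e1" and h2: "e0 = v * x1 / z + e1 / z"
    and P: "P = P1 * (1 - u * v)"
  shows "P * x1 = 1 / z * (P1 * x0) + 1 / z * (- u) * (P1 * z^2 * e0)"
    and "P * z^2 * e1 = - v * (P1 * x0) / (1 / z) + P1 * z^2 * e0 / (1 / z)"
proof -
  show "P * x1 = 1 / z * (P1 * x0) + 1 / z * (- u) * (P1 * z^2 * e0)"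
    unfolding P h1 h2 using z by (simp add: field_simps power2_eq_square)
  show "P * z^2 * e1 = - v * (P1 * x0) / (1 / z) + P1 * z^2 * e0 / (1 / z)"
    unfolding P h1 h2 using z by (simp add: field_simps power2_eq_square)
qed

lemma alg_bwd:
  fixes z x0 x1 e0 e1 u v d :: complex
  assumes z: "z \<noteq> 0" and d: "d = 1 - u * v" "d \<noteq> 0"
    and A: "d * x1 = x0 / z - z * u * e0" and B: "d * z^2 * e1 = - z * v * x0 + z^3 * e0"
  shows "x0 = z * x1 + z * u * e1 \<and> e0 = v * x1 / z + e1 / z"
proof -
  have B': "z^2 * e0 = d * z * e1 + v * x0"
  proof -
    have "z * (z^2 * e0) = z * (d * z * e1 + v * x0)" using B by (simp add: algebra_simps power2_eq_square power3_eq_cube)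
    thus ?thesis using z by simp
  qed
  have A': "x0 = z * d * x1 + z^2 * u * e0" using A z by (simp add: field_simps power2_eq_square)
  have "x0 * d = d * (z * (x1 + u * e1))"
  proof -
    have c: "z^2 * u * e0 = u * (d * z * e1 + v * x0)"
    proof -
      have "z^2 * u * e0 = u * (z^2 * e0)" by (simp add: algebra_simps)
      also have "\<dots> = u * (d * z * e1 + v * x0)" by (simp only: B')
      finally show ?thesis .
    qed
    have "x0 = z * d * x1 + u * (d * z * e1 + v * x0)" using A' unfolding c .
    thus ?thesis unfolding d(1) by (simp add: algebra_simps)
  qed
  hence "d * x0 = d * (z * x1 + z * u * e1)" by (simp add: algebra_simps)
  hence x0: "x0 = z * x1 + z * u * e1" using d(2) by simp
  have "e0 = (d * z * e1 + v * x0) / z^2" using B' z by (simp add: field_simps)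
  also have "\<dots> = v * x1 / z + e1 / z" unfolding x0 d(1) using z by (simp add: field_simps power2_eq_square)
  finally show ?thesis using x0 by simp
qed


lemma filterlim_nat_int: "filterlim (\<lambda>m::int. nat m) at_top at_top"
proof (subst filterlim_at_top, intro allI)
  fix Z :: nat
  show "eventually (\<lambda>m. Z \<le> nat m) at_top"
    unfolding eventually_at_top_linorder by (intro exI[of _ "int Z"]) auto
qed

lemma filterlim_nat_neg_int: "filterlim (\<lambda>m::int. nat (-m)) at_top at_bot"
proof (subst filterlim_at_top, intro allI)
  fix Z :: nat
  show "eventually (\<lambda>m. Z \<le> nat (-m)) at_bot"
    unfolding eventually_at_bot_linorder by (intro exI[of _ "- int Z"]) auto
qed

lemma summable_neg_shift:
  assumes "summable (\<lambda>j. cmod (p (- int j)))"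
  shows "summable (\<lambda>j. cmod (p (- int j - 1)))"
proof -
  have "summable (\<lambda>j. cmod (p (- int (Suc j))))" using assms by (subst summable_Suc_iff)
  moreover have "(\<lambda>j. cmod (p (- int (Suc j)))) = (\<lambda>j. cmod (p (- int j - 1)))"
  proof (intro ext)
    fix j
    have e: "- 1 - int j = - int j - 1" by simp
    show "cmod (p (- int (Suc j))) = cmod (p (- int j - 1))" by (simp add: e)
  qed
  ultimately show ?thesis by simp
qed

lemma alg_bwd_pre:
  fixes z P P1 d X1 Y1 Xm Ym u v :: complex
  assumes z: "z \<noteq> 0" and P1: "P1 \<noteq> 0" and d: "d \<noteq> 0" and P: "P = P1 * d"
    and hX: "Xm = 1 / z * X1 + 1 / z * (- u) * Y1" and hY: "Ym = (- v) * X1 / (1 / z) + Y1 / (1 / z)"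
  shows "d * (Xm / P) = (X1 / P1) / z - z * u * (Y1 / (P1 * z^2))"
    and "d * z^2 * (Ym / (P * z^2)) = - z * v * (X1 / P1) + z^3 * (Y1 / (P1 * z^2))"
proof -
  show "d * (Xm / P) = (X1 / P1) / z - z * u * (Y1 / (P1 * z^2))"
    unfolding P hX using z P1 d by (simp add: field_simps power2_eq_square)
  show "d * z^2 * (Ym / (P * z^2)) = - z * v * (X1 / P1) + z^3 * (Y1 / (P1 * z^2))"
    unfolding P hY using z P1 d by (simp add: field_simps power2_eq_square power3_eq_cube)
qed

locale sym_setup = psi_setup +
  assumes dnz: "\<And>n. 1 - u n * v n \<noteq> 0"
begin

definition dd :: "int \<Rightarrow> complex" where "dd j = 1 - u j * v j"
definition gg :: "nat \<Rightarrow> complex" where "gg k = dd (- int k - 1)"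
definition hh :: "nat \<Rightarrow> complex" where "hh k = dd (int k)"

lemma uv_le: "cmod (u x) * cmod (v x) \<le> sig * cmod (u x)"
proof -
  have "cmod (u x) * cmod (v x) \<le> cmod (u x) * sig" by (rule mult_left_mono[OF v_le]) simp
  thus ?thesis by (simp add: mult.commute)
qed

lemma dd_nz: "dd j \<noteq> 0" unfolding dd_def using dnz by simp
lemma gg_nz: "gg k \<noteq> 0" unfolding gg_def using dd_nz by simp
lemma hh_nz: "hh k \<noteq> 0" unfolding hh_def using dd_nz by simp

lemma gg_conv: "convergent_prod gg"
proof -
  have s: "summable (\<lambda>j. cmod (u (- int j - 1)))"
    using Hu unfolding Hs_def by (intro summable_neg_shift) auto
  have "summable (\<lambda>k. norm (gg k - 1))"
  proof (rule summable_comparison_test[OF _ summable_mult[OF s, of sig]])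
    show "\<exists>N. \<forall>n\<ge>N. norm (norm (gg n - 1)) \<le> sig * cmod (u (- int n - 1))"
      using uv_le by (auto simp: gg_def dd_def norm_mult)
  qed
  thus ?thesis by (intro abs_convergent_prod_imp_convergent_prod summable_imp_abs_convergent_prod)
qed

lemma hh_conv: "convergent_prod hh"
proof -
  have "summable (\<lambda>k. norm (hh k - 1))"
  proof (rule summable_comparison_test[OF _ summable_mult[OF gu_summable, of sig]])
    show "\<exists>N. \<forall>n\<ge>N. norm (norm (hh n - 1)) \<le> sig * gu n"
      using uv_le by (auto simp: hh_def dd_def gu_def norm_mult)
  qed
  thus ?thesis by (intro abs_convergent_prod_imp_convergent_prod summable_imp_abs_convergent_prod)
qed

definition Gp :: complex where "Gp = prodinf gg"
definition Hp :: complex where "Hp = prodinf hh"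

lemma Gp_nz: "Gp \<noteq> 0" unfolding Gp_def using prodinf_nonzero[OF gg_conv gg_nz] .
lemma Hp_nz: "Hp \<noteq> 0" unfolding Hp_def using prodinf_nonzero[OF hh_conv hh_nz] .

lemma gg_lim: "(\<lambda>n. \<Prod>k<n. gg k) \<longlonglongrightarrow> Gp"
  unfolding Gp_def using convergent_prod_LIMSEQ[OF gg_conv]
  by (subst LIMSEQ_lessThan_iff_atMost[of "\<lambda>A. prod gg A"]) simp
lemma hh_lim: "(\<lambda>n. \<Prod>k<n. hh k) \<longlonglongrightarrow> Hp"
  unfolding Hp_def using convergent_prod_LIMSEQ[OF hh_conv]
  by (subst LIMSEQ_lessThan_iff_atMost[of "\<lambda>A. prod hh A"]) simp

definition PP :: "int \<Rightarrow> complex" where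
  "PP m = (if m \<ge> 0 then Gp / (\<Prod>k<nat m. gg k) else Gp * (\<Prod>k<nat (-m). hh k))"

lemma PP_nz: "PP m \<noteq> 0"
  unfolding PP_def using Gp_nz gg_nz hh_nz by (simp add: prod_zero_iff)

lemma PP_rec: "PP m = PP (m+1) * dd (-m-1)"
proof (cases "m \<ge> 0")
  case True
  have n: "nat (m+1) = Suc (nat m)" using True by simp
  have g: "gg (nat m) = dd (-m-1)" unfolding gg_def using True by simp
  have "PP (m+1) * dd (-m-1) = Gp / ((\<Prod>k<nat m. gg k) * dd (-m-1)) * dd (-m-1)"
    unfolding PP_def using True n g by simp
  also have "\<dots> = Gp / (\<Prod>k<nat m. gg k)" using dd_nz[of "-m-1"] by simp
  finally show ?thesis unfolding PP_def using True by simp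
next
  case False
  show ?thesis
  proof (cases "m = -1")
    case True thus ?thesis unfolding PP_def hh_def by simp
  next
    case False2: False
    hence m2: "m + 1 < 0" using False by simp
    have n: "nat (-m) = Suc (nat (-(m+1)))" using m2 by simp
    have h: "hh (nat (-(m+1))) = dd (-m-1)" unfolding hh_def using m2 by simp
    show ?thesis unfolding PP_def using False m2 n h by (simp add: algebra_simps)
  qed
qed

lemma PP_top: "(PP \<longlongrightarrow> 1) at_top"
proof -
  have "(\<lambda>N. Gp / (\<Prod>k<N. gg k)) \<longlonglongrightarrow> Gp / Gp"
    by (intro tendsto_intros gg_lim Gp_nz)
  hence t: "(\<lambda>N. Gp / (\<Prod>k<N. gg k)) \<longlonglongrightarrow> 1" using Gp_nz by simp
  have "((\<lambda>m. Gp / (\<Prod>k<nat m. gg k)) \<longlongrightarrow> 1) at_top"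
    using filterlim_compose[OF t filterlim_nat_int] .
  moreover have "eventually (\<lambda>m. Gp / (\<Prod>k<nat m. gg k) = PP m) at_top"
    using eventually_ge_at_top[of "0::int"] by (rule eventually_mono) (simp add: PP_def)
  ultimately show ?thesis by (rule Lim_transform_eventually)
qed

lemma PP_bot: "(PP \<longlongrightarrow> Gp * Hp) at_bot"
proof -
  have t: "(\<lambda>N. Gp * (\<Prod>k<N. hh k)) \<longlonglongrightarrow> Gp * Hp"
    by (intro tendsto_intros hh_lim)
  have "((\<lambda>m. Gp * (\<Prod>k<nat (-m). hh k)) \<longlongrightarrow> Gp * Hp) at_bot"
    using filterlim_compose[OF t filterlim_nat_neg_int] .
  moreover have "eventually (\<lambda>m. Gp * (\<Prod>k<nat (-m). hh k) = PP m) at_bot"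
    using eventually_le_at_bot[of "-1::int"] by (rule eventually_mono) (simp add: PP_def)
  ultimately show ?thesis by (rule Lim_transform_eventually)
qed

lemma prod_sym: "(\<Prod>j\<in>{- int N..int N}. dd j) = (\<Prod>k<N. gg k) * (\<Prod>k<Suc N. hh k)"
proof -
  have seteq: "{- int N..int N} = (\<lambda>k. - int k - 1) ` {..<N} \<union> int ` {..<Suc N}"
  proof (intro set_eqI iffI)
    fix x assume x: "x \<in> {- int N..int N}"
    show "x \<in> (\<lambda>k. - int k - 1) ` {..<N} \<union> int ` {..<Suc N}"
    proof (cases "x < 0")
      case True
      hence "x = - int (nat (-x-1)) - 1" "nat (-x-1) < N" using x by auto
      thus ?thesis by blast
    next
      case False
      hence "x = int (nat x)" "nat x < Suc N" using x by auto
      thus ?thesis by blast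
    qed
  qed auto
  have "(\<Prod>j\<in>{- int N..int N}. dd j) = (\<Prod>j\<in>(\<lambda>k. - int k - 1) ` {..<N}. dd j) * (\<Prod>j\<in>int ` {..<Suc N}. dd j)"
    unfolding seteq by (rule prod.union_disjoint) auto
  also have "(\<Prod>j\<in>(\<lambda>k. - int k - 1) ` {..<N}. dd j) = (\<Prod>k<N. gg k)"
    unfolding gg_def by (subst prod.reindex) (auto simp: inj_on_def)
  also have "(\<Prod>j\<in>int ` {..<Suc N}. dd j) = (\<Prod>k<Suc N. hh k)"
    unfolding hh_def by (subst prod.reindex) auto
  finally show ?thesis .
qed

lemma Dinf_eq: "Dinf u v = Gp * Hp"
proof -
  have "(\<lambda>N. \<Prod>k<Suc N. hh k) \<longlonglongrightarrow> Hp"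
    using hh_lim by (rule LIMSEQ_Suc)
  hence "(\<lambda>N. (\<Prod>k<N. gg k) * (\<Prod>k<Suc N. hh k)) \<longlonglongrightarrow> Gp * Hp"
    by (intro tendsto_intros gg_lim)
  hence "(\<lambda>N. \<Prod>j\<in>{- int N..int N}. 1 - u j * v j) \<longlonglongrightarrow> Gp * Hp"
    using prod_sym unfolding dd_def by simp
  thus ?thesis unfolding Dinf_def by (rule limI)
qed

lemma Dinf_nz: "Dinf u v \<noteq> 0" using Dinf_eq Gp_nz Hp_nz by simp

end

context sym_setup begin

lemma T_fwd:
  assumes z: "z \<noteq> 0" and S: "solves_sys u v z xi eta"
  shows "solves_sys (refl u) (refl v) (1/z) (\<lambda>m. PP m * xi (-m)) (\<lambda>m. PP m * z^2 * eta (-m))"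
  unfolding solves_sys_def
proof (intro allI)
  fix m :: int
  define n where "n = -m-1"
  have m1: "- (m+1) = n" and m0: "- m = n + 1" unfolding n_def by simp_all
  have ru: "refl u m = - u n" and rv: "refl v m = - v n" unfolding refl_def n_def by simp_all
  have P: "PP m = PP (m+1) * (1 - u n * v n)" using PP_rec[of m] unfolding dd_def n_def by simp
  have h1: "xi n = z * xi (n+1) + z * u n * eta (n+1)" and h2: "eta n = v n * xi (n+1) / z + eta (n+1) / z"
    using S unfolding solves_sys_def by blast+
  note a = alg_fwd[OF z h1 h2 P]
  show "PP m * xi (- m) = 1 / z * (PP (m + 1) * xi (- (m + 1))) + 1 / z * refl u m * (PP (m + 1) * z\<^sup>2 * eta (- (m + 1))) \<and>
        PP m * z\<^sup>2 * eta (- m) = refl v m * (PP (m + 1) * xi (- (m + 1))) / (1 / z) + PP (m + 1) * z\<^sup>2 * eta (- (m + 1)) / (1 / z)"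
    unfolding m1 m0 ru rv using a by simp
qed

lemma T_bwd:
  assumes z: "z \<noteq> 0" and S: "solves_sys (refl u) (refl v) (1/z) Xs Ys"
  shows "solves_sys u v z (\<lambda>n. Xs (-n) / PP (-n)) (\<lambda>n. Ys (-n) / (PP (-n) * z^2))"
  unfolding solves_sys_def
proof (intro allI)
  fix n :: int
  define m where "m = -n-1"
  have n1: "- (n+1) = m" and n0: "- n = m + 1" unfolding m_def by simp_all
  have ru: "refl u m = - u n" and rv: "refl v m = - v n" unfolding refl_def m_def by simp_all
  have P: "PP m = PP (m+1) * (1 - u n * v n)" using PP_rec[of m] unfolding dd_def m_def by simp
  have hX: "Xs m = 1 / z * Xs (m+1) + 1 / z * (- u n) * Ys (m+1)"
    and hY: "Ys m = (- v n) * Xs (m+1) / (1 / z) + Ys (m+1) / (1 / z)"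
    using S unfolding solves_sys_def ru[symmetric] rv[symmetric] by blast+
  have dn: "1 - u n * v n \<noteq> 0" using dnz by simp
  note pre = alg_bwd_pre[OF z PP_nz dn P hX hY]
  have r: "Xs (m+1) / PP (m+1) = z * (Xs m / PP m) + z * u n * (Ys m / (PP m * z^2)) \<and>
           Ys (m+1) / (PP (m+1) * z^2) = v n * (Xs m / PP m) / z + (Ys m / (PP m * z^2)) / z"
    by (rule alg_bwd[OF z refl dn pre])
  show "Xs (- n) / PP (- n) = z * (Xs (- (n + 1)) / PP (- (n + 1))) + z * u n * (Ys (- (n + 1)) / (PP (- (n + 1)) * z\<^sup>2)) \<and>
        Ys (- n) / (PP (- n) * z\<^sup>2) = v n * (Xs (- (n + 1)) / PP (- (n + 1))) / z + Ys (- (n + 1)) / (PP (- (n + 1)) * z\<^sup>2) / z"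
    unfolding n1 n0 using r .
qed

lemma phi_to_psibar:
  assumes z: "z \<noteq> 0" and J: "jost_phi u v z xi eta"
  shows "jost_psibar (refl u) (refl v) (1/z) (\<lambda>m. PP m * xi (-m)) (\<lambda>m. PP m * z^2 * eta (-m))"
proof -
  have S: "solves_sys u v z xi eta" and a: "((\<lambda>n. xi n / z powi (-n)) \<longlongrightarrow> 1) at_bot"
    and b: "(eta \<longlongrightarrow> 0) at_bot" using J unfolding jost_phi_def by blast+
  have a': "((\<lambda>m. xi (-m) / z powi (- (-m))) \<longlongrightarrow> 1) at_top" by (rule tendsto_mirror_bot[OF a])
  have "((\<lambda>m. PP m * (xi (-m) / z powi (- (-m)))) \<longlongrightarrow> 1 * 1) at_top"
    by (intro tendsto_mult PP_top a')
  moreover have "(\<lambda>m. PP m * (xi (-m) / z powi (- (-m)))) = (\<lambda>m. PP m * xi (-m) / (1/z) powi (-m))"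
    by (intro ext) (simp add: powi_one_over)
  ultimately have 1: "((\<lambda>m. PP m * xi (-m) / (1/z) powi (-m)) \<longlongrightarrow> 1) at_top" by simp
  have b': "((\<lambda>m. eta (-m)) \<longlongrightarrow> 0) at_top" by (rule tendsto_mirror_bot[OF b])
  have "((\<lambda>m. PP m * z^2 * eta (-m)) \<longlongrightarrow> 1 * z^2 * 0) at_top"
    by (intro tendsto_mult PP_top b' tendsto_const)
  hence 2: "((\<lambda>m. PP m * z^2 * eta (-m)) \<longlongrightarrow> 0) at_top" by simp
  show ?thesis unfolding jost_psibar_def using T_fwd[OF z S] 1 2 by blast
qed

lemma psibar_to_phi:
  assumes z: "z \<noteq> 0" and J: "jost_psibar (refl u) (refl v) (1/z) Xs Ys"
  shows "jost_phi u v z (\<lambda>n. Xs (-n) / PP (-n)) (\<lambda>n. Ys (-n) / (PP (-n) * z^2))"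
proof -
  have S: "solves_sys (refl u) (refl v) (1/z) Xs Ys" and a: "((\<lambda>m. Xs m / (1/z) powi (-m)) \<longlongrightarrow> 1) at_top"
    and b: "(Ys \<longlongrightarrow> 0) at_top" using J unfolding jost_psibar_def by blast+
  have a': "((\<lambda>n. Xs (-n) / (1/z) powi (- (-n))) \<longlongrightarrow> 1) at_bot" by (rule tendsto_mirror_top[OF a])
  have Pb: "((\<lambda>n. PP (-n)) \<longlongrightarrow> 1) at_bot" by (rule tendsto_mirror_top[OF PP_top])
  have "((\<lambda>n. (Xs (-n) / (1/z) powi (- (-n))) / PP (-n)) \<longlongrightarrow> 1 / 1) at_bot"
    by (intro tendsto_divide a' Pb) simp
  moreover have "(\<lambda>n. (Xs (-n) / (1/z) powi (- (-n))) / PP (-n)) = (\<lambda>n. Xs (-n) / PP (-n) / z powi (-n))"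
    by (intro ext) (simp add: powi_one_over)
  ultimately have 1: "((\<lambda>n. Xs (-n) / PP (-n) / z powi (-n)) \<longlongrightarrow> 1) at_bot" by simp
  have b': "((\<lambda>n. Ys (-n)) \<longlongrightarrow> 0) at_bot" by (rule tendsto_mirror_top[OF b])
  have "((\<lambda>n. Ys (-n) / (PP (-n) * z^2)) \<longlongrightarrow> 0 / (1 * z^2)) at_bot"
    by (intro tendsto_divide tendsto_mult b' Pb tendsto_const) (use z in simp)
  hence 2: "((\<lambda>n. Ys (-n) / (PP (-n) * z^2)) \<longlongrightarrow> 0) at_bot" by simp
  show ?thesis unfolding jost_phi_def using T_bwd[OF z S] 1 2 by blast
qed

lemma sym2:
  assumes z: "z \<noteq> 0" and T: "invTlbar_at (refl u) (refl v) (1/z) c"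
  shows "invTr_at u v z (c / Dinf u v)"
  unfolding invTr_at_def
proof (intro conjI allI impI)
  from T obtain Xs Ys where "jost_psibar (refl u) (refl v) (1/z) Xs Ys" unfolding invTlbar_at_def by blast
  from psibar_to_phi[OF z this] show "\<exists>xi eta. jost_phi u v z xi eta" by blast
  fix xi eta assume J: "jost_phi u v z xi eta"
  have "((\<lambda>m. PP m * xi (-m) / (1/z) powi (-m)) \<longlongrightarrow> c) at_bot"
    using T phi_to_psibar[OF z J] unfolding invTlbar_at_def by blast
  hence "((\<lambda>n. PP (-n) * xi (-(-n)) / (1/z) powi (-(-n))) \<longlongrightarrow> c) at_top"
    by (rule tendsto_mirror_bot)
  moreover have "((\<lambda>n. PP (-n)) \<longlongrightarrow> Gp * Hp) at_top" by (rule tendsto_mirror_bot[OF PP_bot])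
  ultimately have "((\<lambda>n. (PP (-n) * xi (-(-n)) / (1/z) powi (-(-n))) / PP (-n)) \<longlongrightarrow> c / (Gp * Hp)) at_top"
    using Gp_nz Hp_nz by (intro tendsto_divide) auto
  moreover have "(\<lambda>n. (PP (-n) * xi (-(-n)) / (1/z) powi (-(-n))) / PP (-n)) = (\<lambda>n. xi n / z powi (-n))"
    using PP_nz by (intro ext) (simp add: powi_one_over)
  ultimately show "((\<lambda>n. xi n / z powi (- n)) \<longlongrightarrow> c / Dinf u v) at_top"
    unfolding Dinf_eq by simp
qed

end

lemma infsum_refl_eq:
  "(\<Sum>\<^sub>\<infinity>k. refl p (k+1) * refl q k) = (\<Sum>\<^sub>\<infinity>k. q (k+1) * p k)"
proof -
  define h :: "int \<Rightarrow> int" where "h k = -k-2" for k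
  have inj: "inj_on h UNIV" unfolding h_def inj_on_def by simp
  have surj: "h ` UNIV = UNIV" unfolding h_def
    by (auto simp: image_iff intro!: exI[of _ "-x-2" for x])
  have "(\<Sum>\<^sub>\<infinity>k. q (k+1) * p k) = infsum (\<lambda>k. q (k+1) * p k) (h ` UNIV)" using surj by simp
  also have "\<dots> = infsum ((\<lambda>k. q (k+1) * p k) \<circ> h) UNIV" by (rule infsum_reindex[OF inj])
  also have "\<dots> = (\<Sum>\<^sub>\<infinity>k. refl p (k+1) * refl q k)"
  proof (rule infsum_cong)
    fix k :: int
    have e1: "- (k + 1) - 1 = h k" and e2: "- k - 1 = h k + 1" unfolding h_def by simp_all
    show "((\<lambda>k. q (k+1) * p k) \<circ> h) k = refl p (k+1) * refl q k"
      unfolding refl_def e1 e2 by (simp add: mult.commute)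
  qed
  finally show ?thesis by simp
qed

lemma Dinf_comm: "Dinf v u = Dinf u v"
  unfolding Dinf_def by (simp add: mult.commute)

lemma outside_holo:
  assumes "continuous_on (cball 0 1) B" "B holomorphic_on ball 0 1"
  shows "(\<lambda>z. B (1/z)) holomorphic_on {z. 1 < cmod z}"
    and "continuous_on {z. 1 \<le> cmod z} (\<lambda>z. B (1/z))"
proof -
  have "((\<lambda>z. B z) \<circ> (\<lambda>z. 1/z)) holomorphic_on {z. 1 < cmod z}"
  proof (rule holomorphic_on_compose_gen[OF _ assms(2)])
    show "(\<lambda>z::complex. 1/z) holomorphic_on {z. 1 < cmod z}"
      by (intro holomorphic_intros) auto
    show "(\<lambda>z::complex. 1/z) ` {z. 1 < cmod z} \<subseteq> ball 0 1"
      by (auto simp: norm_divide divide_less_eq)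
  qed
  thus "(\<lambda>z. B (1/z)) holomorphic_on {z. 1 < cmod z}" by (simp add: o_def)
  show "continuous_on {z. 1 \<le> cmod z} (\<lambda>z. B (1/z))"
  proof (rule continuous_on_compose2[OF assms(1)])
    show "continuous_on {z. 1 \<le> cmod z} (\<lambda>z::complex. 1/z)"
      by (intro continuous_intros) auto
    show "(\<lambda>z::complex. 1/z) ` {z. 1 \<le> cmod z} \<subseteq> cball 0 1"
      by (auto simp: norm_divide divide_le_eq)
  qed
qed

theorem proposition2p4:
  fixes u v :: "int \<Rightarrow> complex"
  assumes "rapidly_decaying u" and "rapidly_decaying v"
    and "\<And>n. 1 - u n * v n \<noteq> 0"
  defines "S \<equiv> (\<Sum>\<^sub>\<infinity>k::int. u (k+1) * v k)"
    and "Sbar \<equiv> (\<Sum>\<^sub>\<infinity>k::int. u k * v (k+1))"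
    and "D \<equiv> Dinf u v"
  shows "(\<exists>F. ext_inside (invTl_at u v) F \<and>
           (\<lambda>z. 1 / F z - (1 - z^2 * S)) \<in> O[at 0](\<lambda>z. z^4)) \<and>
         (\<exists>G. ext_inside (invTr_at u v) G \<and>
           (\<lambda>z. 1 / G z - D * (1 - z^2 * S)) \<in> O[at 0](\<lambda>z. z^4)) \<and>
         (\<exists>F. ext_outside (invTlbar_at u v) F \<and>
           (\<lambda>z. 1 / F z - (1 - Sbar / z^2)) \<in> O[at_infinity](\<lambda>z. 1 / z^4)) \<and>
         (\<exists>G. ext_outside (invTrbar_at u v) G \<and>
           (\<lambda>z. 1 / G z - D * (1 - Sbar / z^2)) \<in> O[at_infinity](\<lambda>z. 1 / z^4))"
proof -
  have Hu: "Hs u" and Hv: "Hs v" using assms(1,2) by (auto intro: rapid_Hs)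
  have Hu': "Hs (refl u)" and Hv': "Hs (refl v)" using Hu Hv by (auto intro: Hs_refl)
  interpret su: sym_setup u v using Hu Hv assms(3) by unfold_locales auto
  interpret sv: sym_setup v u using Hu Hv assms(3) by unfold_locales (auto simp: mult.commute)
  have D0: "D \<noteq> 0" unfolding D_def by (rule su.Dinf_nz)
  have Sbar': "(\<Sum>\<^sub>\<infinity>k. v (k+1) * u k) = Sbar" unfolding Sbar_def by (simp add: mult.commute)
  obtain B1 K1 where B1: "continuous_on (cball 0 1) B1" "B1 holomorphic_on ball 0 1"
      "\<And>z. cmod z = 1 \<Longrightarrow> invTl_at u v z (B1 z)"
      "\<And>z. cmod z \<le> 1 \<Longrightarrow> cmod (B1 z - 1 - z^2 * S) \<le> K1 * cmod z ^ 4"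
    using psi_main[OF Hu Hv] unfolding S_def by blast
  have P1: "\<exists>F. ext_inside (invTl_at u v) F \<and> (\<lambda>z. 1 / F z - (1 - z^2 * S)) \<in> O[at 0](\<lambda>z. z^4)"
    using B1 bigo_T[of B1 S K1] unfolding ext_inside_def by blast
  obtain B2 K2 where B2: "continuous_on (cball 0 1) B2" "B2 holomorphic_on ball 0 1"
      "\<And>z. cmod z = 1 \<Longrightarrow> invTl_at (refl v) (refl u) z (B2 z)"
      "\<And>z. cmod z \<le> 1 \<Longrightarrow> cmod (B2 z - 1 - z^2 * S) \<le> K2 * cmod z ^ 4"
    using psi_main[OF Hv' Hu'] unfolding S_def infsum_refl_eq by blast
  have P2: "\<exists>G. ext_inside (invTr_at u v) G \<and> (\<lambda>z. 1 / G z - D * (1 - z^2 * S)) \<in> O[at 0](\<lambda>z. z^4)"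
  proof (intro exI conjI)
    show "ext_inside (invTr_at u v) (\<lambda>z. B2 z / D)"
      unfolding ext_inside_def
    proof (intro conjI allI impI)
      show "(\<lambda>z. B2 z / D) holomorphic_on ball 0 1" using B2(2) D0 by (intro holomorphic_intros) auto
      show "continuous_on (cball 0 1) (\<lambda>z. B2 z / D)" using B2(1) D0 by (intro continuous_intros) auto
      fix z :: complex assume z: "cmod z = 1"
      hence z0: "z \<noteq> 0" by auto
      have "invTlbar_at (refl u) (refl v) (1/z) (B2 z)"
        using B2(3)[OF z] invTlbar_swap[of "1/z" "refl u" "refl v" "B2 z"] z0 by simp
      from su.sym2[OF z0 this] show "invTr_at u v z (B2 z / D)" unfolding D_def .
    qed
    have "(\<lambda>z. D * (1 / B2 z - (1 - z^2 * S))) \<in> O[at 0](\<lambda>z. z^4)"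
      using bigo_T[of B2 S K2] B2(4) D0 by simp
    moreover have "(\<lambda>z. 1 / (B2 z / D) - D * (1 - z^2 * S)) = (\<lambda>z. D * (1 / B2 z - (1 - z^2 * S)))"
      by (intro ext) (simp add: algebra_simps)
    ultimately show "(\<lambda>z. 1 / (B2 z / D) - D * (1 - z^2 * S)) \<in> O[at 0](\<lambda>z. z^4)" by simp
  qed
  obtain B3 K3 where B3: "continuous_on (cball 0 1) B3" "B3 holomorphic_on ball 0 1"
      "\<And>z. cmod z = 1 \<Longrightarrow> invTl_at v u z (B3 z)"
      "\<And>z. cmod z \<le> 1 \<Longrightarrow> cmod (B3 z - 1 - z^2 * Sbar) \<le> K3 * cmod z ^ 4"
    using psi_main[OF Hv Hu] unfolding Sbar' by blast
  have P3: "\<exists>F. ext_outside (invTlbar_at u v) F \<and> (\<lambda>z. 1 / F z - (1 - Sbar / z^2)) \<in> O[at_infinity](\<lambda>z. 1 / z^4)"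
  proof (intro exI conjI)
    show "ext_outside (invTlbar_at u v) (\<lambda>z. B3 (1/z))"
      unfolding ext_outside_def
    proof (intro conjI allI impI)
      show "(\<lambda>z. B3 (1/z)) holomorphic_on {z. 1 < cmod z}" using outside_holo[OF B3(1,2)] by blast
      show "continuous_on {z. 1 \<le> cmod z} (\<lambda>z. B3 (1/z))" using outside_holo[OF B3(1,2)] by blast
      fix z :: complex assume z: "cmod z = 1"
      hence z0: "z \<noteq> 0" by auto
      have "cmod (1/z) = 1" using z by (simp add: norm_divide)
      from B3(3)[OF this] show "invTlbar_at u v z (B3 (1/z))" using invTlbar_swap[OF z0] by simp
    qed
    show "(\<lambda>z. 1 / B3 (1/z) - (1 - Sbar / z^2)) \<in> O[at_infinity](\<lambda>z. 1 / z^4)"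
      using bigo_T_inf[of B3 Sbar K3] B3(4) by simp
  qed
  obtain B4 K4 where B4: "continuous_on (cball 0 1) B4" "B4 holomorphic_on ball 0 1"
      "\<And>z. cmod z = 1 \<Longrightarrow> invTl_at (refl u) (refl v) z (B4 z)"
      "\<And>z. cmod z \<le> 1 \<Longrightarrow> cmod (B4 z - 1 - z^2 * Sbar) \<le> K4 * cmod z ^ 4"
    using psi_main[OF Hu' Hv'] unfolding infsum_refl_eq Sbar' by blast
  have P4: "\<exists>G. ext_outside (invTrbar_at u v) G \<and> (\<lambda>z. 1 / G z - D * (1 - Sbar / z^2)) \<in> O[at_infinity](\<lambda>z. 1 / z^4)"
  proof (intro exI conjI)
    show "ext_outside (invTrbar_at u v) (\<lambda>z. B4 (1/z) / D)"
      unfolding ext_outside_def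
    proof (intro conjI allI impI)
      show "(\<lambda>z. B4 (1/z) / D) holomorphic_on {z. 1 < cmod z}"
        by (rule holomorphic_on_divide[OF outside_holo(1)[OF B4(1,2)] holomorphic_on_const]) (use D0 in auto)
      show "continuous_on {z. 1 \<le> cmod z} (\<lambda>z. B4 (1/z) / D)"
        by (rule continuous_on_divide[OF outside_holo(2)[OF B4(1,2)] continuous_on_const]) (use D0 in auto)
      fix z :: complex assume z: "cmod z = 1"
      hence z0: "z \<noteq> 0" by auto
      define w where "w = 1/z"
      have w1: "cmod w = 1" unfolding w_def using z by (simp add: norm_divide)
      hence w0: "w \<noteq> 0" by auto
      have "invTlbar_at (refl v) (refl u) (1/w) (B4 w)"
        using B4(3)[OF w1] invTlbar_swap[of "1/w" "refl v" "refl u" "B4 w"] w0 by simp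
      from sv.sym2[OF w0 this] have "invTr_at v u w (B4 w / Dinf v u)" .
      hence "invTr_at v u w (B4 w / D)" unfolding D_def Dinf_comm[of u v] .
      thus "invTrbar_at u v z (B4 (1/z) / D)" using invTrbar_swap[OF z0] unfolding w_def by simp
    qed
    have "(\<lambda>z. D * (1 / B4 (1/z) - (1 - Sbar / z^2))) \<in> O[at_infinity](\<lambda>z. 1 / z^4)"
      using bigo_T_inf[of B4 Sbar K4] B4(4) D0 by simp
    moreover have "(\<lambda>z. 1 / (B4 (1/z) / D) - D * (1 - Sbar / z^2)) = (\<lambda>z. D * (1 / B4 (1/z) - (1 - Sbar / z^2)))"
      by (intro ext) (simp add: algebra_simps)
    ultimately show "(\<lambda>z. 1 / (B4 (1/z) / D) - D * (1 - Sbar / z^2)) \<in> O[at_infinity](\<lambda>z. 1 / z^4)" by simp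
  qed
  show ?thesis using P1 P2 P3 P4 by blast
qed


end
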